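(* Let $\mathcal A=\{a_1,\ldots,a_n\}\subset\mathbb N^m$ be a list of nonzero vectors and let $i\in\{1,\ldots,n\}$ be such that $a_i\in\sum_{j\neq i}\mathbb Q a_j$. Let $b\in\mathbb Z^+$ be a divisor of $B_i$ and set $\mathcal A':=\{a_1,\ldots,a_{i-1},b\,a_i,a_{i+1},\ldots,a_n\}$. Then $\mu(I_{\mathcal A})=\mu(I_{\mathcal A'})$. In particular, $I_{\mathcal A}$ is a complete intersection if and only if $I_{\mathcal A'}$ is.
   Context: $k$ is an arbitrary field. For a finite list $\mathcal A=\{a_1,\ldots,a_n\}$ of nonzero vectors in $\mathbb N^m$, the toric ideal $I_{\mathcal A}\subset k[x_1,\ldots,x_n]$ is the kernel of the $k$-algebra homomorphism $k[x_1,\ldots,x_n]\to k[t_1,\ldots,t_m]$, $x_i\mapsto t^{a_i}=t_1^{a_{i1}}\cdots t_m^{a_{im}}$; its height is $n-\mathrm{rk}(\mathbb Z\mathcal A)$. $\mu(I)$ denotes the minimal number of generators of an ideal $I$; $I$ is a complete intersection if $\mu(I)$ equals its height. When $a_i\in\sum_{j\neq i}\mathbb Q a_j$, define $B_i:=\min\{b\in\mathbb Z^+ : b\,a_i\in\sum_{j\in\{1,\ldots,n\},j\neq i}\mathbb Z a_j\}$. *)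

theory Defs
  imports Complex_Main "HOL-Library.Poly_Mapping"
begin

text \<open>Multivariate polynomials over 'k: finitely supported maps from monomials
(exponent vectors nat =>0 nat, variable x_i is index i) to coefficients.
The polynomial ring k[x_1,...,x_n] corresponds to variables 0,...,n-1.\<close>

type_synonym 'k mpoly = "(nat \<Rightarrow>\<^sub>0 nat) \<Rightarrow>\<^sub>0 'k"

definition poly_ring :: "nat \<Rightarrow> 'k::field mpoly set" where
  "poly_ring n = {p::'k mpoly. \<forall>\<alpha>\<in>Poly_Mapping.keys p. Poly_Mapping.keys \<alpha> \<subseteq> {..<n}}"

definition ideal_gen :: "nat \<Rightarrow> 'k::field mpoly set \<Rightarrow> 'k mpoly set" where
  "ideal_gen n G = {p. \<exists>F r. finite F \<and> F \<subseteq> G \<and> (\<forall>g\<in>F. r g \<in> poly_ring n)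
                        \<and> p = (\<Sum>g\<in>F. r g * g)}"

definition mu :: "nat \<Rightarrow> 'k::field mpoly set \<Rightarrow> nat" where
  "mu n I = (LEAST c. \<exists>G. finite G \<and> G \<subseteq> poly_ring n \<and> ideal_gen n G = I \<and> card G = c)"

text \<open>A is a list of vectors in N^m, represented as functions nat => nat
(coordinates 0..m-1). The image of x^alpha is t^(sum_i alpha_i a_i).\<close>
definition toric_exp :: "(nat \<Rightarrow> nat) list \<Rightarrow> (nat \<Rightarrow>\<^sub>0 nat) \<Rightarrow> (nat \<Rightarrow> nat)" where
  "toric_exp A \<alpha> = (\<lambda>l. \<Sum>i<length A. Poly_Mapping.lookup \<alpha> i * (A ! i) l)"

definition toric_image_coeff :: "(nat \<Rightarrow> nat) list \<Rightarrow> 'k::field mpoly \<Rightarrow> (nat \<Rightarrow> nat) \<Rightarrow> 'k" where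
  "toric_image_coeff A p \<beta> = (\<Sum>\<alpha>\<in>{\<alpha>\<in>Poly_Mapping.keys p. toric_exp A \<alpha> = \<beta>}. Poly_Mapping.lookup p \<alpha>)"

text \<open>The toric ideal: kernel of k[x_1..x_n] -> k[t_1..t_m], x_i |-> t^(a_i).\<close>
definition toric_ideal :: "(nat \<Rightarrow> nat) list \<Rightarrow> 'k::field mpoly set" where
  "toric_ideal A = {p \<in> poly_ring (length A). \<forall>\<beta>. toric_image_coeff A p \<beta> = 0}"

text \<open>Rank of the lattice ZA (= dimension of the Q-span of the a_i).\<close>
definition lin_indep_Q :: "(nat \<Rightarrow> nat) list \<Rightarrow> nat set \<Rightarrow> bool" where
  "lin_indep_Q A S = (\<forall>c::nat \<Rightarrow> rat. (\<forall>l. (\<Sum>j\<in>S. c j * of_nat ((A ! j) l)) = 0)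
                         \<longrightarrow> (\<forall>j\<in>S. c j = 0))"

definition lattice_rank :: "(nat \<Rightarrow> nat) list \<Rightarrow> nat" where
  "lattice_rank A = Max {card S | S. S \<subseteq> {..<length A} \<and> lin_indep_Q A S}"

text \<open>Height of I_A, given by n - rk(ZA).\<close>
definition toric_height :: "(nat \<Rightarrow> nat) list \<Rightarrow> nat" where
  "toric_height A = length A - lattice_rank A"

definition toric_ci :: "'k::field itself \<Rightarrow> (nat \<Rightarrow> nat) list \<Rightarrow> bool" where
  "toric_ci _ A = (mu (length A) (toric_ideal A :: 'k mpoly set) = toric_height A)"

definition in_Q_span_others :: "(nat \<Rightarrow> nat) list \<Rightarrow> nat \<Rightarrow> bool" where
  "in_Q_span_others A i = (\<exists>q::nat \<Rightarrow> rat. \<forall>l.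
      of_nat ((A ! i) l) = (\<Sum>j\<in>{..<length A} - {i}. q j * of_nat ((A ! j) l)))"

definition B_index :: "(nat \<Rightarrow> nat) list \<Rightarrow> nat \<Rightarrow> nat" where
  "B_index A i = (LEAST b. b > 0 \<and> (\<exists>z::nat \<Rightarrow> int. \<forall>l.
      int b * int ((A ! i) l) = (\<Sum>j\<in>{..<length A} - {i}. z j * int ((A ! j) l))))"

end

theory Submission
  imports Defs
begin

context vector_space begin

lemma card_le_mod:
  assumes W: "subspace W" and fG: "finite G" and fH: "finite H"
    and ind: "\<forall>c. (\<Sum>h\<in>H. c h *s h) \<in> W \<longrightarrow> (\<forall>h\<in>H. c h = 0)"
    and sp: "\<forall>h\<in>H. \<exists>s\<in>span G. h - s \<in> W"
  shows "card H \<le> card G"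
proof -
  define U where "U = span (G \<union> H)"
  obtain C where C: "C \<subseteq> W \<inter> U" "independent C" "W \<inter> U \<subseteq> span C"
    using maximal_independent_subset by blast
  have CU: "C \<subseteq> span (G \<union> H)" using C(1) U_def by auto
  have fC: "finite C" and cC: "card C \<le> card (G \<union> H)"
    using independent_span_bound[OF _ C(2) CU] fG fH by auto
  have HC: "H \<inter> C = {}"
  proof (rule ccontr)
    assume "H \<inter> C \<noteq> {}"
    then obtain h where h: "h \<in> H" "h \<in> C" by auto
    define c where "c = (\<lambda>x. if x = h then (1::'a) else 0)"
    have "(\<Sum>x\<in>H. c x *s x) = (\<Sum>x\<in>H. if x = h then x else 0)"
      by (rule sum.cong) (auto simp: c_def)
    also have "\<dots> = h" using h(1) fH by simp
    finally have "(\<Sum>x\<in>H. c x *s x) = h" .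
    hence "(\<Sum>x\<in>H. c x *s x) \<in> W" using h C(1) by auto
    hence "c h = 0" using ind h by blast
    thus False by (simp add: c_def)
  qed
  have indHC: "independent (H' \<union> C)" if "H' \<subseteq> H" for H'
  proof -
    have "finite H'" using that fH finite_subset by blast
    thus ?thesis using that
    proof (induction H')
      case empty then show ?case using C(2) by simp
    next
      case (insert h H')
      have IH: "independent (H' \<union> C)" using insert by auto
      have hnot: "h \<notin> H' \<union> C" using insert HC by auto
      have "h \<notin> span (H' \<union> C)"
      proof
        assume "h \<in> span (H' \<union> C)"
        then obtain x y where xy: "h = x + y" "x \<in> span H'" "y \<in> span C"
          unfolding span_Un by blast
        obtain u where u: "x = (\<Sum>v\<in>H'. u v *s v)"
          using xy(2) span_finite[OF insert(1)] by auto
        have yW: "y \<in> W" using xy(3) C(1) span_minimal[OF _ W] by blast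
        define c where "c = (\<lambda>v. if v = h then (1::'a) else if v \<in> H' then - u v else 0)"
        have Hsplit: "H = insert h H' \<union> (H - insert h H')" using insert by auto
        have "(\<Sum>v\<in>H. c v *s v) = (\<Sum>v\<in>insert h H'. c v *s v)"
          by (rule sum.mono_neutral_right) (use fH insert in \<open>auto simp: c_def\<close>)
        also have "\<dots> = h + (\<Sum>v\<in>H'. c v *s v)"
          using insert by (simp add: c_def)
        also have "(\<Sum>v\<in>H'. c v *s v) = (\<Sum>v\<in>H'. - (u v *s v))"
          by (rule sum.cong) (use insert in \<open>auto simp: c_def scale_minus_left\<close>)
        also have "\<dots> = - x" by (simp add: u sum_negf)
        finally have "(\<Sum>v\<in>H. c v *s v) = y" using xy(1) by simp
        hence "c h = 0" using ind yW insert by auto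
        thus False by (simp add: c_def)
      qed
      then show ?case using IH hnot by (simp add: independent_insert)
    qed
  qed
  have "H \<union> C \<subseteq> span (G \<union> C)"
  proof
    fix x assume "x \<in> H \<union> C"
    then show "x \<in> span (G \<union> C)"
    proof
      assume "x \<in> C" thus ?thesis by (simp add: span_base)
    next
      assume xH: "x \<in> H"
      then obtain s where s: "s \<in> span G" "x - s \<in> W" using sp by blast
      have "s \<in> U" using s(1) U_def span_mono by blast
      moreover have "x \<in> U" using xH U_def span_base by blast
      ultimately have "x - s \<in> U" unfolding U_def by (simp add: span_diff)
      hence "x - s \<in> span C" using s(2) C(3) by blast
      moreover have "s \<in> span (G \<union> C)" using s(1) span_mono by blast
      moreover have "span C \<subseteq> span (G \<union> C)" by (simp add: span_mono)
      ultimately have "s + (x - s) \<in> span (G \<union> C)" using span_add by blast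
      thus ?thesis by simp
    qed
  qed
  hence "card (H \<union> C) \<le> card (G \<union> C)"
    using independent_span_bound[OF _ indHC[OF order_refl]] fG fC by auto
  also have "\<dots> \<le> card G + card C" by (rule card_Un_le)
  also have "card (H \<union> C) = card H + card C" using HC fH fC by (simp add: card_Un_disjoint)
  finally show ?thesis by simp
qed
end


type_synonym mon = "nat \<Rightarrow>\<^sub>0 nat"

definition lin :: "(mon \<Rightarrow> 'k \<Rightarrow> 'k::field mpoly) \<Rightarrow> 'k mpoly \<Rightarrow> 'k mpoly" where
  "lin F p = (\<Sum>\<alpha>\<in>Poly_Mapping.keys p. F \<alpha> (Poly_Mapping.lookup p \<alpha>))"

definition additiveF :: "(mon \<Rightarrow> 'k \<Rightarrow> 'k::field mpoly) \<Rightarrow> bool" where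
  "additiveF F \<longleftrightarrow> (\<forall>\<alpha>. F \<alpha> 0 = 0) \<and> (\<forall>\<alpha> a c. F \<alpha> (a + c) = F \<alpha> a + F \<alpha> c)"

lemma lin_superset:
  assumes "\<And>\<alpha>. F \<alpha> 0 = 0" "finite S" "Poly_Mapping.keys p \<subseteq> S"
  shows "lin F p = (\<Sum>\<alpha>\<in>S. F \<alpha> (Poly_Mapping.lookup p \<alpha>))"
  unfolding lin_def by (rule sum.mono_neutral_left) (use assms in \<open>auto simp: in_keys_iff\<close>)

lemma lin_add:
  assumes "additiveF F"
  shows "lin F (p + q) = lin F p + lin F q"
proof -
  let ?S = "Poly_Mapping.keys p \<union> Poly_Mapping.keys q"
  have z: "\<And>\<alpha>. F \<alpha> 0 = 0" using assms additiveF_def by auto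
  have "lin F (p + q) = (\<Sum>\<alpha>\<in>?S. F \<alpha> (Poly_Mapping.lookup (p+q) \<alpha>))"
    by (rule lin_superset) (auto simp: keys_add z)
  also have "\<dots> = (\<Sum>\<alpha>\<in>?S. F \<alpha> (Poly_Mapping.lookup p \<alpha>) + F \<alpha> (Poly_Mapping.lookup q \<alpha>))"
    using assms by (simp add: lookup_add additiveF_def)
  also have "\<dots> = lin F p + lin F q"
    by (simp add: sum.distrib lin_superset[of F ?S p, OF z] lin_superset[of F ?S q, OF z])
  finally show ?thesis .
qed

lemma lin_zero [simp]: "lin F 0 = 0"
  by (simp add: lin_def)

lemma lin_single:
  assumes "F \<alpha> 0 = 0"
  shows "lin F (Poly_Mapping.single \<alpha> c) = F \<alpha> c"
  using assms by (simp add: lin_def)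

lemma lin_sum:
  assumes "additiveF F"
  shows "lin F (sum f I) = (\<Sum>x\<in>I. lin F (f x))"
proof (cases "finite I")
  case True
  then show ?thesis by (induction I) (simp_all add: lin_add[OF assms])
qed simp

lemma additiveF_single [simp]: "additiveF (\<lambda>\<alpha> c. Poly_Mapping.single (f \<alpha>) c)"
  by (simp add: additiveF_def single_add)

lemma additiveF_single_if [simp]: "additiveF (\<lambda>\<alpha> c. if P \<alpha> then Poly_Mapping.single (f \<alpha>) c else 0)"
  by (simp add: additiveF_def single_add)

lemma expand_mpoly: "p = (\<Sum>\<alpha>\<in>Poly_Mapping.keys p. Poly_Mapping.single \<alpha> (Poly_Mapping.lookup p \<alpha>))"
proof (rule poly_mapping_eqI)
  fix \<beta>
  have "Poly_Mapping.lookup (\<Sum>\<alpha>\<in>Poly_Mapping.keys p. Poly_Mapping.single \<alpha> (Poly_Mapping.lookup p \<alpha>)) \<beta>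
      = (\<Sum>\<alpha>\<in>Poly_Mapping.keys p. if \<alpha> = \<beta> then Poly_Mapping.lookup p \<alpha> else 0)"
    by (simp add: lookup_sum lookup_single when_def)
  also have "\<dots> = Poly_Mapping.lookup p \<beta>"
    by (simp add: in_keys_iff)
  finally show "Poly_Mapping.lookup p \<beta> = Poly_Mapping.lookup (\<Sum>\<alpha>\<in>Poly_Mapping.keys p. Poly_Mapping.single \<alpha> (Poly_Mapping.lookup p \<alpha>)) \<beta>"
    by simp
qed

lemma lin_id: "lin (\<lambda>\<alpha> c. Poly_Mapping.single \<alpha> c) p = p"
  unfolding lin_def by (rule expand_mpoly[symmetric])

lemma mult_expand:
  "(p::'k::field mpoly) * q = (\<Sum>\<alpha>\<in>Poly_Mapping.keys p. \<Sum>\<beta>\<in>Poly_Mapping.keys q.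
      Poly_Mapping.single (\<alpha> + \<beta>) (Poly_Mapping.lookup p \<alpha> * Poly_Mapping.lookup q \<beta>))"
proof -
  have "p * q = (\<Sum>\<alpha>\<in>Poly_Mapping.keys p. Poly_Mapping.single \<alpha> (Poly_Mapping.lookup p \<alpha>))
              * (\<Sum>\<beta>\<in>Poly_Mapping.keys q. Poly_Mapping.single \<beta> (Poly_Mapping.lookup q \<beta>))"
    using expand_mpoly[of p] expand_mpoly[of q] by simp
  then show ?thesis by (simp add: sum_product mult_single)
qed

lemma lin_mult:
  assumes "additiveF F"
  shows "lin F (p * q) = (\<Sum>\<alpha>\<in>Poly_Mapping.keys p. \<Sum>\<beta>\<in>Poly_Mapping.keys q.
      F (\<alpha> + \<beta>) (Poly_Mapping.lookup p \<alpha> * Poly_Mapping.lookup q \<beta>))"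
proof -
  have z: "\<And>\<alpha>. F \<alpha> 0 = 0" using assms additiveF_def by auto
  show ?thesis
    by (subst mult_expand) (simp add: lin_sum[OF assms] lin_single[of F, OF z])
qed

lemma lin_lin:
  assumes "additiveF F" "\<And>\<alpha>. G \<alpha> 0 = 0"
  shows "lin F (lin G p) = (\<Sum>\<alpha>\<in>Poly_Mapping.keys p. lin F (G \<alpha> (Poly_Mapping.lookup p \<alpha>)))"
  unfolding lin_def[of G] by (simp add: lin_sum[OF assms(1)])

lemma lookup_lin_single:
  assumes "inj f"
  shows "Poly_Mapping.lookup (lin (\<lambda>\<alpha> c. Poly_Mapping.single (f \<alpha>) c) p) (f \<alpha>) = Poly_Mapping.lookup p \<alpha>"
proof -
  have "Poly_Mapping.lookup (lin (\<lambda>\<alpha> c. Poly_Mapping.single (f \<alpha>) c) p) (f \<alpha>)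
     = (\<Sum>\<beta>\<in>Poly_Mapping.keys p. if \<beta> = \<alpha> then Poly_Mapping.lookup p \<beta> else 0)"
    unfolding lin_def lookup_sum
    by (rule sum.cong) (auto simp: lookup_single when_def inj_eq[OF assms])
  also have "\<dots> = Poly_Mapping.lookup p \<alpha>" by (simp add: in_keys_iff)
  finally show ?thesis .
qed

lemma keys_lin:
  assumes "\<And>\<alpha>. \<alpha> \<in> Poly_Mapping.keys p \<Longrightarrow> Poly_Mapping.keys (F \<alpha> (Poly_Mapping.lookup p \<alpha>)) \<subseteq> S"
  shows "Poly_Mapping.keys (lin F p) \<subseteq> S"
  unfolding lin_def using keys_sum assms by fastforce



lemma texp_add: "toric_exp A (\<alpha> + \<beta>) l = toric_exp A \<alpha> l + toric_exp A \<beta> l"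
  by (simp add: toric_exp_def lookup_add algebra_simps sum.distrib)

lemma texp_add_fun: "toric_exp A (\<alpha> + \<beta>) = (\<lambda>l. toric_exp A \<alpha> l + toric_exp A \<beta> l)"
  by (simp add: texp_add fun_eq_iff)

lemma texp_zero [simp]: "toric_exp A 0 l = 0"
  by (simp add: toric_exp_def)

lemma texp_single: "toric_exp A (Poly_Mapping.single j c) l = (if j < length A then c * (A ! j) l else 0)"
  by (simp add: toric_exp_def lookup_single when_def if_distrib[of "\<lambda>x. x * _"] cong: if_cong)

lemma tic_alt: "toric_image_coeff A p \<beta> =
   (\<Sum>\<alpha>\<in>Poly_Mapping.keys p. if toric_exp A \<alpha> = \<beta> then Poly_Mapping.lookup p \<alpha> else 0)"
  unfolding toric_image_coeff_def by (simp add: sum.If_cases Int_def conj_commute)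

lemma tic_superset:
  assumes "finite S" "Poly_Mapping.keys p \<subseteq> S"
  shows "toric_image_coeff A p \<beta> =
   (\<Sum>\<alpha>\<in>S. if toric_exp A \<alpha> = \<beta> then Poly_Mapping.lookup p \<alpha> else 0)"
  unfolding tic_alt by (rule sum.mono_neutral_left) (use assms in \<open>auto simp: in_keys_iff\<close>)

lemma tic_add: "toric_image_coeff A (p + q) \<beta> = toric_image_coeff A p \<beta> + toric_image_coeff A q \<beta>"
proof -
  let ?S = "Poly_Mapping.keys p \<union> Poly_Mapping.keys q"
  have "toric_image_coeff A (p + q) \<beta> = (\<Sum>\<alpha>\<in>?S. if toric_exp A \<alpha> = \<beta> then Poly_Mapping.lookup (p+q) \<alpha> else 0)"
    by (rule tic_superset) (auto simp: keys_add)
  also have "\<dots> = (\<Sum>\<alpha>\<in>?S. (if toric_exp A \<alpha> = \<beta> then Poly_Mapping.lookup p \<alpha> else 0)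
       + (if toric_exp A \<alpha> = \<beta> then Poly_Mapping.lookup q \<alpha> else 0))"
    by (rule sum.cong) (auto simp: lookup_add)
  also have "\<dots> = toric_image_coeff A p \<beta> + toric_image_coeff A q \<beta>"
    by (simp add: sum.distrib tic_superset[of ?S p] tic_superset[of ?S q])
  finally show ?thesis .
qed

lemma tic_zero [simp]: "toric_image_coeff A 0 \<beta> = 0"
  by (simp add: toric_image_coeff_def)

lemma tic_sum: "toric_image_coeff A (sum f I) \<beta> = (\<Sum>x\<in>I. toric_image_coeff A (f x) \<beta>)"
proof (cases "finite I")
  case True
  then show ?thesis by (induction I) (simp_all add: tic_add)
qed simp

lemma tic_single: "toric_image_coeff A (Poly_Mapping.single \<alpha> c) \<beta> = (if toric_exp A \<alpha> = \<beta> then c else 0)"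
  by (simp add: tic_alt)

lemma tic_lin: "toric_image_coeff A (lin F p) \<beta>
   = (\<Sum>\<alpha>\<in>Poly_Mapping.keys p. toric_image_coeff A (F \<alpha> (Poly_Mapping.lookup p \<alpha>)) \<beta>)"
  unfolding lin_def by (rule tic_sum)

lemma tic_mult_single:
  "toric_image_coeff A (Poly_Mapping.single \<alpha> c * p) \<beta> =
     (if \<forall>l. toric_exp A \<alpha> l \<le> \<beta> l then c * toric_image_coeff A p (\<lambda>l. \<beta> l - toric_exp A \<alpha> l) else 0)"
proof -
  have "toric_image_coeff A (Poly_Mapping.single \<alpha> c * p) \<beta> =
     (\<Sum>\<gamma>\<in>Poly_Mapping.keys p. if toric_exp A (\<alpha> + \<gamma>) = \<beta> then c * Poly_Mapping.lookup p \<gamma> else 0)"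
  proof (cases "c = 0")
    case True
    then show ?thesis by (simp cong: if_cong)
  next
    case False
    then show ?thesis by (subst mult_expand) (simp add: tic_sum tic_single)
  qed
  also have "\<dots> = (if \<forall>l. toric_exp A \<alpha> l \<le> \<beta> l then c * toric_image_coeff A p (\<lambda>l. \<beta> l - toric_exp A \<alpha> l) else 0)"
  proof (cases "\<forall>l. toric_exp A \<alpha> l \<le> \<beta> l")
    case True
    have e: "(toric_exp A \<alpha> l + toric_exp A \<gamma> l = \<beta> l) = (toric_exp A \<gamma> l = \<beta> l - toric_exp A \<alpha> l)" for \<gamma> l
      using True[rule_format, of l] by arith
    have "\<And>\<gamma>. toric_exp A (\<alpha> + \<gamma>) = \<beta> \<longleftrightarrow> toric_exp A \<gamma> = (\<lambda>l. \<beta> l - toric_exp A \<alpha> l)"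
      by (simp add: fun_eq_iff texp_add e)
    then show ?thesis using True by (simp add: tic_alt sum_distrib_left if_distrib cong: if_cong)
  next
    case False
    then obtain l where "toric_exp A \<alpha> l > \<beta> l" by (auto simp: not_le)
    hence "toric_exp A (\<alpha> + \<gamma>) l \<noteq> \<beta> l" for \<gamma> using texp_add[of A \<alpha> \<gamma> l] by arith
    hence "\<And>\<gamma>. toric_exp A (\<alpha> + \<gamma>) \<noteq> \<beta>" by metis
    then have "(\<Sum>\<gamma>\<in>Poly_Mapping.keys p. if toric_exp A (\<alpha> + \<gamma>) = \<beta> then c * Poly_Mapping.lookup p \<gamma> else 0) = 0"
      by (simp cong: if_cong)
    then show ?thesis using False by presburger
  qed
  finally show ?thesis .
qed

subsection \<open>The polynomial ring\<close>

lemma in_poly_ring: "p \<in> poly_ring n \<longleftrightarrow> (\<forall>\<alpha>\<in>Poly_Mapping.keys p. Poly_Mapping.keys \<alpha> \<subseteq> {..<n})"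
  by (simp add: poly_ring_def)

lemma R_zero [simp]: "0 \<in> poly_ring n" by (simp add: in_poly_ring)
lemma R_one [simp]: "1 \<in> poly_ring n" by (simp add: in_poly_ring)

lemma R_add: assumes "p \<in> poly_ring n" "q \<in> poly_ring n" shows "p + q \<in> poly_ring n"
  unfolding in_poly_ring
proof
  fix \<gamma> assume "\<gamma> \<in> Poly_Mapping.keys (p + q)"
  hence "\<gamma> \<in> Poly_Mapping.keys p \<union> Poly_Mapping.keys q" using keys_add[of p q] by blast
  thus "Poly_Mapping.keys \<gamma> \<subseteq> {..<n}" using assms unfolding in_poly_ring by blast
qed

lemma R_mult: assumes "p \<in> poly_ring n" "q \<in> poly_ring n" shows "p * q \<in> poly_ring n"
  unfolding in_poly_ring
proof
  fix \<gamma> assume "\<gamma> \<in> Poly_Mapping.keys (p * q)"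
  then obtain a c where ac: "\<gamma> = a + c" "a \<in> Poly_Mapping.keys p" "c \<in> Poly_Mapping.keys q"
    using keys_mult[of p q] by blast
  have "Poly_Mapping.keys \<gamma> \<subseteq> Poly_Mapping.keys a \<union> Poly_Mapping.keys c"
    unfolding ac(1) by (rule keys_add)
  also have "\<dots> \<subseteq> {..<n}" using assms ac unfolding in_poly_ring by blast
  finally show "Poly_Mapping.keys \<gamma> \<subseteq> {..<n}" .
qed

lemma R_sum: "(\<And>x. x \<in> I \<Longrightarrow> f x \<in> poly_ring n) \<Longrightarrow> sum f I \<in> poly_ring n"
proof (induction I rule: infinite_finite_induct)
  case (insert x F)
  then show ?case using R_add[of "f x" n "sum f F"] by simp
qed simp_all

lemma R_single: "Poly_Mapping.keys \<alpha> \<subseteq> {..<n} \<Longrightarrow> Poly_Mapping.single \<alpha> c \<in> poly_ring n"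
  by (simp add: in_poly_ring)

lemma R_lin: "(\<And>\<alpha>. \<alpha> \<in> Poly_Mapping.keys p \<Longrightarrow> F \<alpha> (Poly_Mapping.lookup p \<alpha>) \<in> poly_ring n) \<Longrightarrow> lin F p \<in> poly_ring n"
  unfolding lin_def by (rule R_sum)

lemma R_uminus: "p \<in> poly_ring n \<Longrightarrow> - p \<in> poly_ring n"
  by (simp add: in_poly_ring)

lemma R_diff: "p \<in> poly_ring n \<Longrightarrow> q \<in> poly_ring n \<Longrightarrow> p - q \<in> poly_ring n"
  unfolding diff_conv_add_uminus by (rule R_add, assumption, rule R_uminus)

subsection \<open>Toric ideal closure\<close>

lemma in_toric_ideal: "p \<in> toric_ideal A \<longleftrightarrow> p \<in> poly_ring (length A) \<and> (\<forall>\<beta>. toric_image_coeff A p \<beta> = 0)"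
  by (simp add: toric_ideal_def)

lemma I_zero [simp]: "0 \<in> toric_ideal A" by (simp add: in_toric_ideal)

lemma I_add: "p \<in> toric_ideal A \<Longrightarrow> q \<in> toric_ideal A \<Longrightarrow> p + q \<in> toric_ideal A"
  by (simp add: in_toric_ideal R_add tic_add)

lemma I_sum: "(\<And>x. x \<in> I \<Longrightarrow> f x \<in> toric_ideal A) \<Longrightarrow> sum f I \<in> toric_ideal A"
proof (induction I rule: infinite_finite_induct)
  case (insert x F)
  then show ?case using I_add[of "f x" A "sum f F"] by simp
qed simp_all

lemma I_mult: assumes "r \<in> poly_ring (length A)" "p \<in> toric_ideal A" shows "r * p \<in> toric_ideal A"
proof -
  have eq: "r * p = (\<Sum>\<alpha>\<in>Poly_Mapping.keys r. Poly_Mapping.single \<alpha> (Poly_Mapping.lookup r \<alpha>)) * p"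
    by (rule arg_cong[where f="\<lambda>x. x * p"], rule expand_mpoly)
  have z: "toric_image_coeff A (Poly_Mapping.single \<alpha> c * p) \<beta> = 0" for \<alpha> c \<beta>
    using assms(2) unfolding tic_mult_single in_toric_ideal by simp
  have "toric_image_coeff A (r * p) \<beta> = 0" for \<beta>
  proof -
    have "toric_image_coeff A (r * p) \<beta> = toric_image_coeff A (\<Sum>\<alpha>\<in>Poly_Mapping.keys r. Poly_Mapping.single \<alpha> (Poly_Mapping.lookup r \<alpha>) * p) \<beta>"
      unfolding eq sum_distrib_right ..
    also have "\<dots> = (\<Sum>\<alpha>\<in>Poly_Mapping.keys r. toric_image_coeff A (Poly_Mapping.single \<alpha> (Poly_Mapping.lookup r \<alpha>) * p) \<beta>)"
      by (rule tic_sum)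
    also have "\<dots> = 0" by (simp only: z sum.neutral_const)
    finally show ?thesis .
  qed
  thus ?thesis using assms R_mult in_toric_ideal by blast
qed



locale tsetup =
  fixes A :: "(nat \<Rightarrow> nat) list" and m i b :: nat
  assumes bnd: "\<forall>a\<in>set A. \<forall>l\<ge>m. a l = 0"
    and nz: "\<forall>a\<in>set A. a \<noteq> (\<lambda>_. 0)"
    and iA: "i < length A"
    and bpos: "b > 0" and bdvd: "b dvd B_index A i"
begin

definition A' where "A' = A[i := (\<lambda>l. b * (A ! i) l)]"

lemma len_A' [simp]: "length A' = length A"
  by (simp add: A'_def)

lemma A'_nth: "j < length A \<Longrightarrow> A' ! j = (if j = i then (\<lambda>l. b * (A ! i) l) else A ! j)"
  by (simp add: A'_def nth_list_update)

definition phim :: "mon \<Rightarrow> mon" where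
  "phim \<alpha> = Poly_Mapping.update i (b * Poly_Mapping.lookup \<alpha> i) \<alpha>"
definition rhom :: "mon \<Rightarrow> mon" where
  "rhom \<alpha> = Poly_Mapping.update i (Poly_Mapping.lookup \<alpha> i div b) \<alpha>"
definition sigm :: "nat \<Rightarrow> mon \<Rightarrow> mon" where
  "sigm r \<alpha> = Poly_Mapping.update i ((Poly_Mapping.lookup \<alpha> i - r) div b) \<alpha>"

lemma lookup_phim: "Poly_Mapping.lookup (phim \<alpha>) j = (if j = i then b * Poly_Mapping.lookup \<alpha> i else Poly_Mapping.lookup \<alpha> j)"
  by (simp add: phim_def lookup_update)
lemma lookup_rhom: "Poly_Mapping.lookup (rhom \<alpha>) j = (if j = i then Poly_Mapping.lookup \<alpha> i div b else Poly_Mapping.lookup \<alpha> j)"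
  by (simp add: rhom_def lookup_update)
lemma lookup_sigm: "Poly_Mapping.lookup (sigm r \<alpha>) j = (if j = i then (Poly_Mapping.lookup \<alpha> i - r) div b else Poly_Mapping.lookup \<alpha> j)"
  by (simp add: sigm_def lookup_update)

lemma keys_upd: "Poly_Mapping.keys (Poly_Mapping.update i v \<alpha>) \<subseteq> insert i (Poly_Mapping.keys \<alpha>)"
  by (auto simp: keys_update)

lemma keys_phim: "Poly_Mapping.keys \<alpha> \<subseteq> {..<length A} \<Longrightarrow> Poly_Mapping.keys (phim \<alpha>) \<subseteq> {..<length A}"
  unfolding phim_def using keys_upd iA by blast
lemma keys_rhom: "Poly_Mapping.keys \<alpha> \<subseteq> {..<length A} \<Longrightarrow> Poly_Mapping.keys (rhom \<alpha>) \<subseteq> {..<length A}"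
  unfolding rhom_def using keys_upd iA by blast
lemma keys_sigm: "Poly_Mapping.keys \<alpha> \<subseteq> {..<length A} \<Longrightarrow> Poly_Mapping.keys (sigm r \<alpha>) \<subseteq> {..<length A}"
  unfolding sigm_def using keys_upd iA by blast

lemma phim_add: "phim (\<alpha> + \<beta>) = phim \<alpha> + phim \<beta>"
  by (rule poly_mapping_eqI) (simp add: lookup_phim lookup_add algebra_simps)

lemma inj_phim: "inj phim"
proof (rule injI)
  fix \<alpha> \<beta> assume "phim \<alpha> = phim \<beta>"
  hence h: "Poly_Mapping.lookup (phim \<alpha>) j = Poly_Mapping.lookup (phim \<beta>) j" for j by simp
  have "Poly_Mapping.lookup \<alpha> j = Poly_Mapping.lookup \<beta> j" for j
  proof (cases "j = i")
    case True
    from h[of i] have "b * Poly_Mapping.lookup \<alpha> i = b * Poly_Mapping.lookup \<beta> i" by (simp add: lookup_phim)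
    then show ?thesis using bpos True by simp
  next
    case False
    then show ?thesis using h[of j] by (simp add: lookup_phim)
  qed
  thus "\<alpha> = \<beta>" by (rule poly_mapping_eqI)
qed

lemma rhom_phim_add: "rhom (\<alpha> + phim \<beta>) = rhom \<alpha> + \<beta>"
  by (rule poly_mapping_eqI) (use bpos in \<open>simp add: lookup_rhom lookup_phim lookup_add\<close>)

lemma dvd_phim_add: "b dvd Poly_Mapping.lookup (\<alpha> + phim \<beta>) i \<longleftrightarrow> b dvd Poly_Mapping.lookup \<alpha> i"
  by (simp add: lookup_add lookup_phim) (metis dvd_add_times_triv_right_iff mult.commute)

lemma rhom_zero [simp]: "rhom 0 = 0"
  by (rule poly_mapping_eqI) (simp add: lookup_rhom)

lemma texp_phim: "toric_exp A (phim \<alpha>) = toric_exp A' \<alpha>"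
  unfolding toric_exp_def
proof (rule ext, rule sum.cong)
  fix l j assume "j \<in> {..<length A'}"
  hence j: "j < length A" by simp
  show "Poly_Mapping.lookup (phim \<alpha>) j * (A ! j) l = Poly_Mapping.lookup \<alpha> j * (A' ! j) l"
    using j by (simp add: lookup_phim A'_nth)
qed simp

definition phi :: "'k::field mpoly \<Rightarrow> 'k mpoly" where
  "phi p = lin (\<lambda>\<alpha> c. Poly_Mapping.single (phim \<alpha>) c) p"
definition rho :: "'k::field mpoly \<Rightarrow> 'k mpoly" where
  "rho p = lin (\<lambda>\<alpha> c. if b dvd Poly_Mapping.lookup \<alpha> i then Poly_Mapping.single (rhom \<alpha>) c else 0) p"

lemma phi_add: "phi (p + q) = phi p + phi q"
  unfolding phi_def by (rule lin_add) simp

lemma phi_sum: "phi (sum f I) = (\<Sum>x\<in>I. phi (f x))"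
  unfolding phi_def by (rule lin_sum) simp

lemma phi_mult: "phi (p * q) = phi p * phi q"
proof -
  have "phi (p * q) = (\<Sum>\<alpha>\<in>Poly_Mapping.keys p. \<Sum>\<beta>\<in>Poly_Mapping.keys q.
      Poly_Mapping.single (phim (\<alpha> + \<beta>)) (Poly_Mapping.lookup p \<alpha> * Poly_Mapping.lookup q \<beta>))"
    unfolding phi_def by (rule lin_mult) simp
  also have "\<dots> = phi p * phi q"
    unfolding phi_def lin_def by (simp add: sum_product mult_single phim_add)
  finally show ?thesis .
qed

lemma tic_phi: "toric_image_coeff A (phi p) \<beta> = toric_image_coeff A' p \<beta>"
  unfolding phi_def tic_lin tic_single texp_phim tic_alt[of A' p] ..

lemma R_phi: "p \<in> poly_ring (length A) \<Longrightarrow> phi p \<in> poly_ring (length A)"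
  unfolding phi_def by (rule R_lin, rule R_single, rule keys_phim) (auto simp: in_poly_ring)

lemma I_phi: "q \<in> toric_ideal A' \<Longrightarrow> phi q \<in> toric_ideal A"
  by (simp add: in_toric_ideal R_phi tic_phi)

lemma rho_single: "rho (Poly_Mapping.single \<gamma> c) = (if b dvd Poly_Mapping.lookup \<gamma> i then Poly_Mapping.single (rhom \<gamma>) c else 0)"
  unfolding rho_def by (rule lin_single) simp

lemma rho_mult_phi: "rho (f * phi g) = rho f * g"
proof -
  have "f * phi g = (\<Sum>\<alpha>\<in>Poly_Mapping.keys f. Poly_Mapping.single \<alpha> (Poly_Mapping.lookup f \<alpha>))
        * (\<Sum>\<beta>\<in>Poly_Mapping.keys g. Poly_Mapping.single (phim \<beta>) (Poly_Mapping.lookup g \<beta>))"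
    unfolding phi_def lin_def by (rule arg_cong[where f="\<lambda>x. x * _"], rule expand_mpoly)
  also have "\<dots> = (\<Sum>\<alpha>\<in>Poly_Mapping.keys f. \<Sum>\<beta>\<in>Poly_Mapping.keys g.
       Poly_Mapping.single (\<alpha> + phim \<beta>) (Poly_Mapping.lookup f \<alpha> * Poly_Mapping.lookup g \<beta>))"
    by (simp add: sum_product mult_single)
  finally have e: "rho (f * phi g) = (\<Sum>\<alpha>\<in>Poly_Mapping.keys f. \<Sum>\<beta>\<in>Poly_Mapping.keys g.
       rho (Poly_Mapping.single (\<alpha> + phim \<beta>) (Poly_Mapping.lookup f \<alpha> * Poly_Mapping.lookup g \<beta>)))"
    unfolding rho_def by (simp add: lin_sum)
  have "rho f * g = (\<Sum>\<alpha>\<in>Poly_Mapping.keys f. if b dvd Poly_Mapping.lookup \<alpha> i then Poly_Mapping.single (rhom \<alpha>) (Poly_Mapping.lookup f \<alpha>) else 0)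
        * (\<Sum>\<beta>\<in>Poly_Mapping.keys g. Poly_Mapping.single \<beta> (Poly_Mapping.lookup g \<beta>))"
    unfolding rho_def lin_def by (rule arg_cong[where f="\<lambda>x. _ * x"], rule expand_mpoly)
  also have "\<dots> = (\<Sum>\<alpha>\<in>Poly_Mapping.keys f. \<Sum>\<beta>\<in>Poly_Mapping.keys g.
       (if b dvd Poly_Mapping.lookup \<alpha> i then Poly_Mapping.single (rhom \<alpha>) (Poly_Mapping.lookup f \<alpha>) else 0) * Poly_Mapping.single \<beta> (Poly_Mapping.lookup g \<beta>))"
    by (simp add: sum_product)
  also have "\<dots> = (\<Sum>\<alpha>\<in>Poly_Mapping.keys f. \<Sum>\<beta>\<in>Poly_Mapping.keys g.
       rho (Poly_Mapping.single (\<alpha> + phim \<beta>) (Poly_Mapping.lookup f \<alpha> * Poly_Mapping.lookup g \<beta>)))"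
    by (intro sum.cong refl) (simp add: rho_single dvd_phim_add rhom_phim_add mult_single)
  finally show ?thesis using e by simp
qed

lemma rho_one: "rho 1 = 1"
  using rho_single[of 0 1] by simp

lemma rho_phi: "rho (phi q) = q"
  using rho_mult_phi[of 1 q] by (simp add: rho_one)

lemma R_rho: "p \<in> poly_ring (length A) \<Longrightarrow> rho p \<in> poly_ring (length A)"
  unfolding rho_def by (rule R_lin) (auto intro!: R_single keys_rhom simp: in_poly_ring)

end


definition hc :: "(mon \<Rightarrow> bool) \<Rightarrow> 'k::field mpoly \<Rightarrow> 'k mpoly" where
  "hc P p = lin (\<lambda>\<alpha> c. if P \<alpha> then Poly_Mapping.single \<alpha> c else 0) p"

lemma lookup_hc: "Poly_Mapping.lookup (hc P p) \<alpha> = (if P \<alpha> then Poly_Mapping.lookup p \<alpha> else 0)"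
proof -
  have "Poly_Mapping.lookup (hc P p) \<alpha> = (\<Sum>\<gamma>\<in>Poly_Mapping.keys p. if \<gamma> = \<alpha> then (if P \<alpha> then Poly_Mapping.lookup p \<alpha> else 0) else 0)"
    unfolding hc_def lin_def lookup_sum by (rule sum.cong) (auto simp: lookup_single when_def)
  also have "\<dots> = (if P \<alpha> then Poly_Mapping.lookup p \<alpha> else 0)"
    by (simp add: in_keys_iff)
  finally show ?thesis .
qed

lemma keys_hc: "Poly_Mapping.keys (hc P p) = {\<alpha>\<in>Poly_Mapping.keys p. P \<alpha>}"
  by (auto simp: in_keys_iff lookup_hc split: if_splits)

lemma hc_decomp:
  "p = (\<Sum>\<beta>\<in>toric_exp A ` Poly_Mapping.keys p. hc (\<lambda>\<alpha>. toric_exp A \<alpha> = \<beta>) p)"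
proof (rule poly_mapping_eqI)
  fix \<alpha>
  have "Poly_Mapping.lookup (\<Sum>\<beta>\<in>toric_exp A ` Poly_Mapping.keys p. hc (\<lambda>\<alpha>. toric_exp A \<alpha> = \<beta>) p) \<alpha>
      = (\<Sum>\<beta>\<in>toric_exp A ` Poly_Mapping.keys p. if toric_exp A \<alpha> = \<beta> then Poly_Mapping.lookup p \<alpha> else 0)"
    by (simp add: lookup_sum lookup_hc)
  also have "\<dots> = Poly_Mapping.lookup p \<alpha>"
    by (cases "\<alpha> \<in> Poly_Mapping.keys p") (auto simp: in_keys_iff)
  finally show "Poly_Mapping.lookup p \<alpha> = Poly_Mapping.lookup (\<Sum>\<beta>\<in>toric_exp A ` Poly_Mapping.keys p. hc (\<lambda>\<alpha>. toric_exp A \<alpha> = \<beta>) p) \<alpha>" by simp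
qed

lemma tic_hc: "toric_image_coeff A (hc (\<lambda>\<alpha>. Q (toric_exp A \<alpha>)) p) \<beta> = (if Q \<beta> then toric_image_coeff A p \<beta> else 0)"
proof -
  have "toric_image_coeff A (hc (\<lambda>\<alpha>. Q (toric_exp A \<alpha>)) p) \<beta>
     = (\<Sum>\<alpha>\<in>Poly_Mapping.keys p. if Q \<beta> then (if toric_exp A \<alpha> = \<beta> then Poly_Mapping.lookup p \<alpha> else 0) else 0)"
    unfolding hc_def tic_lin by (rule sum.cong) (auto simp: tic_single)
  also have "\<dots> = (if Q \<beta> then toric_image_coeff A p \<beta> else 0)"
    by (simp add: tic_alt)
  finally show ?thesis .
qed

lemma R_hc: "p \<in> poly_ring n \<Longrightarrow> hc P p \<in> poly_ring n"
  by (auto simp: in_poly_ring keys_hc)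

lemma I_hc: "p \<in> toric_ideal A \<Longrightarrow> hc (\<lambda>\<alpha>. Q (toric_exp A \<alpha>)) p \<in> toric_ideal A"
  by (simp add: in_toric_ideal R_hc tic_hc)

context tsetup begin

lemma res:
  assumes "toric_exp A \<alpha> = toric_exp A \<alpha>'"
  shows "Poly_Mapping.lookup \<alpha> i mod b = Poly_Mapping.lookup \<alpha>' i mod b"
proof -
  let ?J = "{..<length A} - {i}"
  define c where "c = int (Poly_Mapping.lookup \<alpha> i) - int (Poly_Mapping.lookup \<alpha>' i)"
  define z where "z j = int (Poly_Mapping.lookup \<alpha>' j) - int (Poly_Mapping.lookup \<alpha> j)" for j
  have split: "(\<Sum>j<length A. f j) = f i + (\<Sum>j\<in>?J. f j)" for f :: "nat \<Rightarrow> int"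
    using iA by (simp add: sum.remove)
  have key: "c * int ((A ! i) l) = (\<Sum>j\<in>?J. z j * int ((A ! j) l))" for l
  proof -
    from assms have "toric_exp A \<alpha> l = toric_exp A \<alpha>' l" by simp
    hence "int (\<Sum>j<length A. Poly_Mapping.lookup \<alpha> j * (A ! j) l) = int (\<Sum>j<length A. Poly_Mapping.lookup \<alpha>' j * (A ! j) l)"
      unfolding toric_exp_def by simp
    hence "(\<Sum>j<length A. int (Poly_Mapping.lookup \<alpha> j) * int ((A ! j) l)) = (\<Sum>j<length A. int (Poly_Mapping.lookup \<alpha>' j) * int ((A ! j) l))"
      by simp
    hence "int (Poly_Mapping.lookup \<alpha> i) * int ((A ! i) l) + (\<Sum>j\<in>?J. int (Poly_Mapping.lookup \<alpha> j) * int ((A ! j) l))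
      = int (Poly_Mapping.lookup \<alpha>' i) * int ((A ! i) l) + (\<Sum>j\<in>?J. int (Poly_Mapping.lookup \<alpha>' j) * int ((A ! j) l))"
      by (simp add: split)
    thus ?thesis unfolding c_def z_def by (simp add: algebra_simps sum_subtractf)
  qed
  define P where "P B \<longleftrightarrow> B > 0 \<and> (\<exists>z::nat \<Rightarrow> int. \<forall>l. int B * int ((A ! i) l) = (\<Sum>j\<in>?J. z j * int ((A ! j) l)))" for B
  have BI: "B_index A i = (LEAST B. P B)" unfolding B_index_def P_def ..
  have "int b dvd c"
  proof (cases "c = 0")
    case False
    have "P (nat \<bar>c\<bar>)"
    proof (cases "c > 0")
      case True
      then show ?thesis unfolding P_def using key by auto
    next
      case False2: False
      hence "int (nat \<bar>c\<bar>) = - c" using False by simp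
      moreover have "(- c) * int ((A ! i) l) = (\<Sum>j\<in>?J. (- z j) * int ((A ! j) l))" for l
        using key[of l] by (simp add: sum_negf)
      ultimately show ?thesis unfolding P_def using False by (intro conjI exI[of _ "\<lambda>j. - z j"]) auto
    qed
    hence PB: "P (B_index A i)" unfolding BI by (rule LeastI)
    define B where "B = B_index A i"
    from PB obtain zB where Bpos: "B > 0" and zB: "\<And>l. int B * int ((A ! i) l) = (\<Sum>j\<in>?J. zB j * int ((A ! j) l))"
      unfolding P_def B_def by blast
    define r where "r = c mod int B"
    have r0: "r \<ge> 0" and rB: "r < int B" using Bpos unfolding r_def by auto
    have cdec: "c = (c div int B) * int B + r" unfolding r_def by simp
    have rkey: "r * int ((A ! i) l) = (\<Sum>j\<in>?J. (z j - (c div int B) * zB j) * int ((A ! j) l))" for l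
    proof -
      have e: "c * int ((A ! i) l) = (c div int B) * (int B * int ((A ! i) l)) + r * int ((A ! i) l)"
        by (metis cdec distrib_right mult.assoc)
      have "r * int ((A ! i) l) = c * int ((A ! i) l) - (c div int B) * (int B * int ((A ! i) l))"
        using e by linarith
      also have "\<dots> = (\<Sum>j\<in>?J. z j * int ((A ! j) l)) - (c div int B) * (\<Sum>j\<in>?J. zB j * int ((A ! j) l))"
        using key zB by simp
      also have "\<dots> = (\<Sum>j\<in>?J. (z j - (c div int B) * zB j) * int ((A ! j) l))"
        by (simp add: sum_distrib_left sum_subtractf algebra_simps)
      finally show ?thesis .
    qed
    have "r = 0"
    proof (rule ccontr)
      assume "r \<noteq> 0"
      hence "r > 0" using r0 by simp
      hence "P (nat r)" unfolding P_def using rkey by (intro conjI exI) auto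
      hence "B \<le> nat r" unfolding B_def BI by (rule Least_le)
      thus False using rB \<open>r > 0\<close> by simp
    qed
    hence "int B dvd c" unfolding r_def by (simp add: dvd_eq_mod_eq_0)
    moreover have "int b dvd int B" using bdvd unfolding B_def by simp
    ultimately show ?thesis using dvd_trans by blast
  qed simp
  hence "int (Poly_Mapping.lookup \<alpha> i) mod int b = int (Poly_Mapping.lookup \<alpha>' i) mod int b"
    unfolding c_def by (simp add: mod_eq_dvd_iff)
  thus ?thesis by (simp flip: zmod_int)
qed

lemma homog_decomp:
  fixes p :: "'k::field mpoly"
  assumes R: "p \<in> poly_ring (length A)" and hom: "\<forall>\<alpha>\<in>Poly_Mapping.keys p. toric_exp A \<alpha> = \<beta>"
  shows "\<exists>r q. q \<in> poly_ring (length A) \<and> p = Poly_Mapping.single (Poly_Mapping.single i r) 1 * phi q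
             \<and> (p \<in> toric_ideal A \<longrightarrow> q \<in> toric_ideal A')"
proof (cases "Poly_Mapping.keys p = {}")
  case True
  hence "p = 0" by simp
  thus ?thesis by (intro exI[of _ 0] exI[of _ "0::'k mpoly"]) (simp add: phi_def)
next
  case False
  then obtain \<alpha>0 where a0: "\<alpha>0 \<in> Poly_Mapping.keys p" by blast
  define r where "r = Poly_Mapping.lookup \<alpha>0 i mod b"
  have resr: "Poly_Mapping.lookup \<alpha> i mod b = r" if "\<alpha> \<in> Poly_Mapping.keys p" for \<alpha>
    unfolding r_def by (rule res) (use hom that a0 in auto)
  define q where "q = lin (\<lambda>\<alpha> c. Poly_Mapping.single (sigm r \<alpha>) c) p"
  have mono: "Poly_Mapping.single i r + phim (sigm r \<alpha>) = \<alpha>" if "\<alpha> \<in> Poly_Mapping.keys p" for \<alpha>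
  proof (rule poly_mapping_eqI)
    fix j
    have mr: "Poly_Mapping.lookup \<alpha> i mod b = r" using resr that .
    have "r + b * ((Poly_Mapping.lookup \<alpha> i - r) div b) = Poly_Mapping.lookup \<alpha> i"
    proof -
      have d: "Poly_Mapping.lookup \<alpha> i = b * (Poly_Mapping.lookup \<alpha> i div b) + r"
        using mr by (metis div_mult_mod_eq mult.commute)
      hence "Poly_Mapping.lookup \<alpha> i - r = b * (Poly_Mapping.lookup \<alpha> i div b)" by simp
      hence "(Poly_Mapping.lookup \<alpha> i - r) div b = Poly_Mapping.lookup \<alpha> i div b" using bpos by simp
      thus ?thesis using d by simp
    qed
    thus "Poly_Mapping.lookup (Poly_Mapping.single i r + phim (sigm r \<alpha>)) j = Poly_Mapping.lookup \<alpha> j"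
      by (cases "j = i") (simp_all add: lookup_add lookup_single lookup_phim lookup_sigm when_def)
  qed
  have phiq: "phi q = (\<Sum>\<alpha>\<in>Poly_Mapping.keys p. Poly_Mapping.single (phim (sigm r \<alpha>)) (Poly_Mapping.lookup p \<alpha>))"
    unfolding phi_def q_def by (simp add: lin_lin lin_single)
  have "Poly_Mapping.single (Poly_Mapping.single i r) 1 * phi q
      = (\<Sum>\<alpha>\<in>Poly_Mapping.keys p. Poly_Mapping.single (Poly_Mapping.single i r + phim (sigm r \<alpha>)) (Poly_Mapping.lookup p \<alpha>))"
    unfolding phiq by (simp add: sum_distrib_left mult_single)
  also have "\<dots> = (\<Sum>\<alpha>\<in>Poly_Mapping.keys p. Poly_Mapping.single \<alpha> (Poly_Mapping.lookup p \<alpha>))"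
    by (rule sum.cong) (simp_all add: mono)
  also have "\<dots> = p" by (rule expand_mpoly[symmetric])
  finally have eq: "p = Poly_Mapping.single (Poly_Mapping.single i r) 1 * phi q" by simp
  have Rq: "q \<in> poly_ring (length A)"
    unfolding q_def using R by (intro R_lin R_single keys_sigm) (auto simp: in_poly_ring)
  have "q \<in> toric_ideal A'" if pI: "p \<in> toric_ideal A"
  proof -
    define \<delta> where "\<delta> = (\<lambda>l. \<beta> l - r * (A ! i) l)"
    have ex: "toric_exp A' (sigm r \<alpha>) = \<delta>" if "\<alpha> \<in> Poly_Mapping.keys p" for \<alpha>
    proof
      fix l
      have "\<beta> l = toric_exp A \<alpha> l" using hom that by simp
      also have "\<dots> = toric_exp A (Poly_Mapping.single i r + phim (sigm r \<alpha>)) l" using mono that by simp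
      also have "\<dots> = r * (A ! i) l + toric_exp A' (sigm r \<alpha>) l"
        by (simp add: texp_add texp_single iA texp_phim)
      finally show "toric_exp A' (sigm r \<alpha>) l = \<delta> l" unfolding \<delta>_def by simp
    qed
    have "toric_image_coeff A' q \<beta>' = 0" for \<beta>'
    proof -
      have "toric_image_coeff A' q \<beta>' = (\<Sum>\<alpha>\<in>Poly_Mapping.keys p. if \<delta> = \<beta>' then Poly_Mapping.lookup p \<alpha> else 0)"
        unfolding q_def tic_lin tic_single by (rule sum.cong) (simp_all add: ex)
      also have "\<dots> = (if \<delta> = \<beta>' then toric_image_coeff A p \<beta> else 0)"
        by (simp add: tic_alt hom)
      also have "\<dots> = 0" using pI by (simp add: in_toric_ideal)
      finally show ?thesis .
    qed
    thus ?thesis using Rq by (simp add: in_toric_ideal)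
  qed
  thus ?thesis using eq Rq by blast
qed

end


lemma IG_induct:
  assumes "p \<in> ideal_gen n G" "P 0" "\<And>p q. P p \<Longrightarrow> P q \<Longrightarrow> P (p + q)"
    "\<And>r g. r \<in> poly_ring n \<Longrightarrow> g \<in> G \<Longrightarrow> P (r * g)"
  shows "P p"
proof -
  obtain F r where F: "finite F" "F \<subseteq> G" "\<forall>g\<in>F. r g \<in> poly_ring n" "p = (\<Sum>g\<in>F. r g * g)"
    using assms(1) unfolding ideal_gen_def by blast
  have "P (\<Sum>g\<in>F'. r g * g)" if "F' \<subseteq> F" for F'
  proof -
    have "finite F'" using that F(1) finite_subset by blast
    thus ?thesis using that
    proof (induction F')
      case empty then show ?case using assms(2) by simp
    next
      case (insert x F')
      have "P (r x * x)" using assms(4) F insert by auto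
      moreover have "P (\<Sum>g\<in>F'. r g * g)" using insert by auto
      ultimately have "P (r x * x + (\<Sum>g\<in>F'. r g * g))" by (rule assms(3))
      then show ?case using insert by simp
    qed
  qed
  thus ?thesis using F(4) by blast
qed

lemma IG_zero [simp]: "0 \<in> ideal_gen n G"
  unfolding ideal_gen_def by (intro CollectI exI[of _ "{}"]) simp

lemma IG_extend:
  assumes "p \<in> ideal_gen n G" "finite F'" "F' \<subseteq> G"
  shows "\<exists>F r. finite F \<and> F' \<subseteq> F \<and> F \<subseteq> G \<and> (\<forall>g\<in>F. r g \<in> poly_ring n) \<and> p = (\<Sum>g\<in>F. r g * g)"
proof -
  obtain F r where F: "finite F" "F \<subseteq> G" "\<forall>g\<in>F. r g \<in> poly_ring n" "p = (\<Sum>g\<in>F. r g * g)"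
    using assms(1) unfolding ideal_gen_def by blast
  define r' where "r' g = (if g \<in> F then r g else 0)" for g
  have "(\<Sum>g\<in>F \<union> F'. r' g * g) = (\<Sum>g\<in>F. r' g * g)"
    by (rule sum.mono_neutral_right) (use F assms in \<open>auto simp: r'_def\<close>)
  also have "\<dots> = p" using F(4) by (simp add: r'_def)
  finally show ?thesis using F assms by (intro exI[of _ "F \<union> F'"] exI[of _ r']) (auto simp: r'_def)
qed

lemma IG_add:
  assumes "p \<in> ideal_gen n G" "q \<in> ideal_gen n G"
  shows "p + q \<in> ideal_gen n G"
proof -
  obtain F1 r1 where F1: "finite F1" "F1 \<subseteq> G" "\<forall>g\<in>F1. r1 g \<in> poly_ring n" "p = (\<Sum>g\<in>F1. r1 g * g)"
    using assms(1) unfolding ideal_gen_def by blast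
  obtain F r2 where F: "finite F" "F1 \<subseteq> F" "F \<subseteq> G" "\<forall>g\<in>F. r2 g \<in> poly_ring n" "q = (\<Sum>g\<in>F. r2 g * g)"
    using IG_extend[OF assms(2) F1(1,2)] by blast
  define r1' where "r1' g = (if g \<in> F1 then r1 g else 0)" for g
  have "p = (\<Sum>g\<in>F. r1' g * g)"
    unfolding F1(4) by (rule sum.mono_neutral_cong_left) (use F F1 in \<open>auto simp: r1'_def\<close>)
  hence "p + q = (\<Sum>g\<in>F. (r1' g + r2 g) * g)" using F(5) by (simp add: sum.distrib distrib_right)
  moreover have "\<forall>g\<in>F. r1' g + r2 g \<in> poly_ring n" using F F1 by (auto simp: r1'_def intro: R_add)
  ultimately show ?thesis unfolding ideal_gen_def using F
    by (intro CollectI exI[of _ F] exI[of _ "\<lambda>g. r1' g + r2 g"]) auto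
qed

lemma IG_mult:
  assumes "r \<in> poly_ring n" "p \<in> ideal_gen n G"
  shows "r * p \<in> ideal_gen n G"
proof -
  obtain F s where F: "finite F" "F \<subseteq> G" "\<forall>g\<in>F. s g \<in> poly_ring n" "p = (\<Sum>g\<in>F. s g * g)"
    using assms(2) unfolding ideal_gen_def by blast
  have "r * p = (\<Sum>g\<in>F. (r * s g) * g)" using F(4) by (simp add: sum_distrib_left mult.assoc)
  moreover have "\<forall>g\<in>F. r * s g \<in> poly_ring n" using F assms by (auto intro: R_mult)
  ultimately show ?thesis unfolding ideal_gen_def using F
    by (intro CollectI exI[of _ F] exI[of _ "\<lambda>g. r * s g"]) auto
qed

lemma IG_gen: "g \<in> G \<Longrightarrow> g \<in> ideal_gen n G"
  unfolding ideal_gen_def by (intro CollectI exI[of _ "{g}"] exI[of _ "\<lambda>_. 1"]) simp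

lemma IG_sum: "(\<And>x. x \<in> I \<Longrightarrow> f x \<in> ideal_gen n G) \<Longrightarrow> sum f I \<in> ideal_gen n G"
proof (induction I rule: infinite_finite_induct)
  case (insert x F)
  then show ?case using IG_add[of "f x" n G "sum f F"] by simp
qed simp_all

lemma IG_sub_toric:
  assumes "G \<subseteq> toric_ideal A"
  shows "ideal_gen (length A) G \<subseteq> toric_ideal A"
proof
  fix p assume "p \<in> ideal_gen (length A) G"
  then show "p \<in> toric_ideal A"
  proof (rule IG_induct[where P="\<lambda>x. x \<in> toric_ideal A"])
    show "p + q \<in> toric_ideal A" if "p \<in> toric_ideal A" "q \<in> toric_ideal A" for p q
      using that by (rule I_add)
    show "r * g \<in> toric_ideal A" if "r \<in> poly_ring (length A)" "g \<in> G" for r g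
      using that assms by (intro I_mult) auto
  qed simp
qed

lemma IG_mono: "G \<subseteq> G' \<Longrightarrow> ideal_gen n G \<subseteq> ideal_gen n G'"
  unfolding ideal_gen_def by blast

context tsetup begin

lemma R_xpow: "Poly_Mapping.single (Poly_Mapping.single i r) c \<in> poly_ring (length A)"
  by (rule R_single) (use iA in auto)

lemma IG_phi:
  assumes "q \<in> ideal_gen (length A) G'"
  shows "phi q \<in> ideal_gen (length A) (phi ` G')"
  using assms
proof (rule IG_induct)
  show "phi 0 \<in> ideal_gen (length A) (phi ` G')" by (simp add: phi_def)
  show "phi (p + q) \<in> ideal_gen (length A) (phi ` G')"
    if "phi p \<in> ideal_gen (length A) (phi ` G')" "phi q \<in> ideal_gen (length A) (phi ` G')" for p q
    using that by (simp add: phi_add IG_add)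
  show "phi (r * g) \<in> ideal_gen (length A) (phi ` G')" if "r \<in> poly_ring (length A)" "g \<in> G'" for r g
    using that by (simp add: phi_mult IG_mult R_phi IG_gen)
qed

lemma dirA:
  fixes G' :: "'k::field mpoly set"
  assumes G': "finite G'" "G' \<subseteq> poly_ring (length A)" "ideal_gen (length A) G' = toric_ideal A'"
  shows "\<exists>G::'k mpoly set. finite G \<and> G \<subseteq> poly_ring (length A) \<and> ideal_gen (length A) G = toric_ideal A \<and> card G \<le> card G'"
proof -
  have f: "finite (phi ` G')" using G' by simp
  have s: "phi ` G' \<subseteq> poly_ring (length A)" using G' R_phi by blast
  have c: "card (phi ` G') \<le> card G'" by (rule card_image_le) (use G' in simp)
  have GI: "phi ` G' \<subseteq> toric_ideal A"
  proof
    fix x assume "x \<in> phi ` G'"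
    then obtain g where g: "g \<in> G'" "x = phi g" by blast
    have "g \<in> toric_ideal A'" using IG_gen[OF g(1), of "length A"] G'(3) by simp
    thus "x \<in> toric_ideal A" using g(2) I_phi by simp
  qed
  have "ideal_gen (length A) (phi ` G') = toric_ideal A"
  proof
    show "ideal_gen (length A) (phi ` G') \<subseteq> toric_ideal A" by (rule IG_sub_toric[OF GI])
  next
    show "toric_ideal A \<subseteq> ideal_gen (length A) (phi ` G')"
    proof
      fix p :: "'k mpoly" assume pI: "p \<in> toric_ideal A"
      have "hc (\<lambda>\<alpha>. toric_exp A \<alpha> = \<beta>) p \<in> ideal_gen (length A) (phi ` G')" for \<beta>
      proof -
        let ?h = "hc (\<lambda>\<alpha>. toric_exp A \<alpha> = \<beta>) p"
        have hI: "?h \<in> toric_ideal A" using I_hc[of p A "\<lambda>x. x = \<beta>"] pI by simp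
        hence hR: "?h \<in> poly_ring (length A)" by (simp add: in_toric_ideal)
        have hh: "\<forall>\<alpha>\<in>Poly_Mapping.keys ?h. toric_exp A \<alpha> = \<beta>" by (simp add: keys_hc)
        obtain r q where rq: "q \<in> poly_ring (length A)" "?h = Poly_Mapping.single (Poly_Mapping.single i r) 1 * phi q"
          "?h \<in> toric_ideal A \<longrightarrow> q \<in> toric_ideal A'"
          using homog_decomp[OF hR hh] by blast
        have "q \<in> ideal_gen (length A) G'" using rq(3) hI G'(3) by simp
        hence "phi q \<in> ideal_gen (length A) (phi ` G')" by (rule IG_phi)
        thus ?thesis unfolding rq(2) by (rule IG_mult[OF R_xpow])
      qed
      hence "(\<Sum>\<beta>\<in>toric_exp A ` Poly_Mapping.keys p. hc (\<lambda>\<alpha>. toric_exp A \<alpha> = \<beta>) p) \<in> ideal_gen (length A) (phi ` G')"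
        by (intro IG_sum)
      thus "p \<in> ideal_gen (length A) (phi ` G')" unfolding hc_decomp[of p A, symmetric] .
    qed
  qed
  hence "finite (phi ` G') \<and> phi ` G' \<subseteq> poly_ring (length A) \<and> ideal_gen (length A) (phi ` G') = toric_ideal A \<and> card (phi ` G') \<le> card G'"
    using f s c by simp
  thus ?thesis by (rule exI)
qed

end


definition sc :: "'k::field \<Rightarrow> 'k mpoly \<Rightarrow> 'k mpoly" where
  "sc c p = Poly_Mapping.single 0 c * p"

lemma vs_sc: "vector_space (sc :: 'k::field \<Rightarrow> 'k mpoly \<Rightarrow> 'k mpoly)"
proof (unfold_locales, unfold sc_def)
  fix a b :: 'k and x y :: "'k mpoly"
  show "Poly_Mapping.single 0 a * (x + y) = Poly_Mapping.single 0 a * x + Poly_Mapping.single 0 a * y"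
    by (simp add: distrib_left)
  show "Poly_Mapping.single 0 (a + b) * x = Poly_Mapping.single 0 a * x + Poly_Mapping.single 0 b * x"
    by (simp add: single_add distrib_right)
  show "Poly_Mapping.single 0 a * (Poly_Mapping.single 0 b * x) = Poly_Mapping.single 0 (a * b) * x"
    by (simp add: mult.assoc[symmetric] mult_single)
  show "Poly_Mapping.single 0 1 * x = x" by simp
qed

interpretation vs: vector_space "sc :: 'k::field \<Rightarrow> 'k mpoly \<Rightarrow> 'k mpoly"
  by (rule vs_sc)

definition xv :: "nat \<Rightarrow> 'k::field mpoly" where
  "xv l = Poly_Mapping.single (Poly_Mapping.single l 1) 1"

definition mI :: "nat \<Rightarrow> 'k::field mpoly set \<Rightarrow> 'k mpoly set" where
  "mI n I = {p. \<exists>q. (\<forall>l<n. q l \<in> I) \<and> p = (\<Sum>l<n. xv l * q l)}"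

lemma R_xv: "l < n \<Longrightarrow> xv l \<in> poly_ring n"
  unfolding xv_def by (rule R_single) auto

lemma R_sc: "p \<in> poly_ring n \<Longrightarrow> sc c p \<in> poly_ring n"
  unfolding sc_def by (rule R_mult[OF R_single]) auto

lemma I_sc: "p \<in> toric_ideal A \<Longrightarrow> sc c p \<in> toric_ideal A"
  unfolding sc_def by (rule I_mult[OF R_single]) auto

lemma mI_zero: "0 \<in> mI n (toric_ideal A)"
  unfolding mI_def by (intro CollectI exI[of _ "\<lambda>_. 0"]) simp

lemma mI_add: "p \<in> mI n (toric_ideal A) \<Longrightarrow> q \<in> mI n (toric_ideal A) \<Longrightarrow> p + q \<in> mI n (toric_ideal A)"
proof -
  assume "p \<in> mI n (toric_ideal A)" "q \<in> mI n (toric_ideal A)"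
  then obtain q1 q2 where q: "\<forall>l<n. q1 l \<in> toric_ideal A" "p = (\<Sum>l<n. xv l * q1 l)"
     "\<forall>l<n. q2 l \<in> toric_ideal A" "q = (\<Sum>l<n. xv l * q2 l)" unfolding mI_def by blast
  have "p + q = (\<Sum>l<n. xv l * (q1 l + q2 l))" using q by (simp add: distrib_left sum.distrib)
  moreover have "\<forall>l<n. q1 l + q2 l \<in> toric_ideal A" using q by (simp add: I_add)
  ultimately show ?thesis unfolding mI_def by (intro CollectI exI[of _ "\<lambda>l. q1 l + q2 l"]) simp
qed

lemma mI_sc: "p \<in> mI n (toric_ideal A) \<Longrightarrow> sc c p \<in> mI n (toric_ideal A)"
proof -
  assume "p \<in> mI n (toric_ideal A)"
  then obtain q where q: "\<forall>l<n. q l \<in> toric_ideal A" "p = (\<Sum>l<n. xv l * q l)" unfolding mI_def by blast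
  have "sc c p = (\<Sum>l<n. xv l * sc c (q l))" using q by (simp add: sc_def sum_distrib_left mult.left_commute)
  moreover have "\<forall>l<n. sc c (q l) \<in> toric_ideal A" using q by (simp add: I_sc)
  ultimately show ?thesis unfolding mI_def by (intro CollectI exI[of _ "\<lambda>l. sc c (q l)"]) simp
qed

lemma mI_subspace: "vs.subspace (mI n (toric_ideal A))"
  by (rule vs.subspaceI) (simp_all add: mI_zero mI_add mI_sc)

lemma mI_sub: "n \<le> length A \<Longrightarrow> mI n (toric_ideal A) \<subseteq> toric_ideal A"
proof
  fix p assume n: "n \<le> length A" and "p \<in> mI n (toric_ideal A)"
  then obtain q where q: "\<forall>l<n. q l \<in> toric_ideal A" "p = (\<Sum>l<n. xv l * q l)" unfolding mI_def by blast
  show "p \<in> toric_ideal A" unfolding q(2) using q(1) n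
    by (intro I_sum I_mult R_xv) auto
qed

lemma mono_decomp:
  assumes "Poly_Mapping.keys \<alpha> \<subseteq> {..<n}"
  shows "\<exists>c s. (\<forall>l<n. s l \<in> poly_ring n) \<and> Poly_Mapping.single \<alpha> (d::'k::field) = Poly_Mapping.single 0 c + (\<Sum>l<n. xv l * s l)"
proof (cases "\<alpha> = 0")
  case True
  then show ?thesis by (intro exI[of _ d] exI[of _ "\<lambda>_. 0"]) simp
next
  case False
  then obtain l where l: "l \<in> Poly_Mapping.keys \<alpha>" by (metis keys_eq_empty ex_in_conv)
  hence ln: "l < n" using assms by auto
  define \<alpha>' where "\<alpha>' = Poly_Mapping.update l (Poly_Mapping.lookup \<alpha> l - 1) \<alpha>"
  have la: "Poly_Mapping.lookup \<alpha> l \<ge> 1" using l by (simp add: in_keys_iff)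
  have ae: "Poly_Mapping.single l 1 + \<alpha>' = \<alpha>"
    by (rule poly_mapping_eqI) (use la in \<open>auto simp: \<alpha>'_def lookup_add lookup_update lookup_single when_def\<close>)
  have ka: "Poly_Mapping.keys \<alpha>' \<subseteq> {..<n}" unfolding \<alpha>'_def using assms ln by (auto simp: keys_update)
  define s where "s j = (if j = l then Poly_Mapping.single \<alpha>' d else 0)" for j
  have "(\<Sum>j<n. xv j * s j) = (\<Sum>j<n. if j = l then xv l * Poly_Mapping.single \<alpha>' d else 0)"
    by (rule sum.cong) (simp_all add: s_def)
  also have "\<dots> = xv l * Poly_Mapping.single \<alpha>' d" using ln by simp
  also have "\<dots> = Poly_Mapping.single \<alpha> d" unfolding xv_def mult_single ae by simp
  finally have "Poly_Mapping.single \<alpha> d = Poly_Mapping.single 0 0 + (\<Sum>j<n. xv j * s j)" by simp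
  moreover have "\<forall>j<n. s j \<in> poly_ring n" using ka by (simp add: s_def R_single)
  ultimately show ?thesis by (intro exI[of _ 0] exI[of _ s] conjI)
qed

lemma R_decomp:
  assumes "(r::'k::field mpoly) \<in> poly_ring n"
  shows "\<exists>c s. (\<forall>l<n. s l \<in> poly_ring n) \<and> r = Poly_Mapping.single 0 c + (\<Sum>l<n. xv l * s l)"
proof -
  let ?D = "{r::'k mpoly. \<exists>c s. (\<forall>l<n. s l \<in> poly_ring n) \<and> r = Poly_Mapping.single 0 c + (\<Sum>l<n. xv l * s l)}"
  have Dadd: "p + q \<in> ?D" if Hp: "p \<in> ?D" and Hq: "q \<in> ?D" for p q
  proof -
    obtain c1 s1 where 1: "\<forall>l<n. s1 l \<in> poly_ring n" "p = Poly_Mapping.single 0 c1 + (\<Sum>l<n. xv l * s1 l)" using Hp unfolding mem_Collect_eq by blast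
    obtain c2 s2 where 2: "\<forall>l<n. s2 l \<in> poly_ring n" "q = Poly_Mapping.single 0 c2 + (\<Sum>l<n. xv l * s2 l)" using Hq unfolding mem_Collect_eq by blast
    have "p + q = Poly_Mapping.single 0 (c1 + c2) + (\<Sum>l<n. xv l * (s1 l + s2 l))"
    proof -
      have e: "(\<Sum>l<n. xv l * (s1 l + s2 l)) = (\<Sum>l<n. xv l * s1 l) + (\<Sum>l<n. xv l * s2 l)"
        by (simp add: distrib_left sum.distrib)
      show ?thesis unfolding e 1(2) 2(2) single_add by (simp only: ac_simps)
    qed
    moreover have "\<forall>l<n. s1 l + s2 l \<in> poly_ring n" using 1 2 by (simp add: R_add)
    ultimately show ?thesis by (intro CollectI exI[of _ "c1 + c2"] exI[of _ "\<lambda>l. s1 l + s2 l"]) simp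
  qed
  have KD: "(\<Sum>\<alpha>\<in>K. Poly_Mapping.single \<alpha> (Poly_Mapping.lookup r \<alpha>)) \<in> ?D" if "K \<subseteq> Poly_Mapping.keys r" for K
  proof -
    have "finite K" by (rule finite_subset[OF that finite_keys])
    thus ?thesis using that
    proof (induction K)
      case empty
      then show ?case by (intro CollectI exI[of _ 0] exI[of _ "\<lambda>_. 0"]) simp
    next
      case (insert \<alpha> K)
      have ka: "Poly_Mapping.keys \<alpha> \<subseteq> {..<n}" using assms insert by (auto simp: in_poly_ring)
      have "Poly_Mapping.single \<alpha> (Poly_Mapping.lookup r \<alpha>) \<in> ?D"
        using mono_decomp[OF ka, of "Poly_Mapping.lookup r \<alpha>"] unfolding mem_Collect_eq .
      moreover have "(\<Sum>\<alpha>\<in>K. Poly_Mapping.single \<alpha> (Poly_Mapping.lookup r \<alpha>)) \<in> ?D" using insert by auto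
      ultimately show ?case using insert Dadd by simp
    qed
  qed
  have "(\<Sum>\<alpha>\<in>Poly_Mapping.keys r. Poly_Mapping.single \<alpha> (Poly_Mapping.lookup r \<alpha>)) \<in> ?D" by (rule KD) simp
  hence "r \<in> ?D" unfolding expand_mpoly[of r, symmetric] .
  thus ?thesis unfolding mem_Collect_eq .
qed

lemma span_mod:
  fixes G :: "'k::field mpoly set"
  assumes G: "G \<subseteq> toric_ideal A" and p: "p \<in> ideal_gen (length A) G"
  shows "\<exists>s\<in>vs.span G. p - s \<in> mI (length A) (toric_ideal A)"
  using p
proof (rule IG_induct[where P="\<lambda>p. \<exists>s\<in>vs.span G. p - s \<in> mI (length A) (toric_ideal A)"])
  show "\<exists>s\<in>vs.span G. 0 - s \<in> mI (length A) (toric_ideal A)"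
    by (intro bexI[of _ 0]) (simp_all add: mI_zero vs.span_zero)
next
  fix p q
  assume "\<exists>s\<in>vs.span G. p - s \<in> mI (length A) (toric_ideal A)" "\<exists>s\<in>vs.span G. q - s \<in> mI (length A) (toric_ideal A)"
  then obtain s1 s2 where s: "s1 \<in> vs.span G" "p - s1 \<in> mI (length A) (toric_ideal A)"
    "s2 \<in> vs.span G" "q - s2 \<in> mI (length A) (toric_ideal A)" by blast
  have e: "(p + q) - (s1 + s2) = (p - s1) + (q - s2)" by simp
  have "(p + q) - (s1 + s2) \<in> mI (length A) (toric_ideal A)" unfolding e by (rule mI_add[OF s(2) s(4)])
  thus "\<exists>s\<in>vs.span G. p + q - s \<in> mI (length A) (toric_ideal A)"
    by (intro bexI[of _ "s1 + s2"] vs.span_add s(1) s(3))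
next
  fix r g :: "'k mpoly" assume r: "r \<in> poly_ring (length A)" and g: "g \<in> G"
  obtain c s where cs: "\<forall>l<length A. s l \<in> poly_ring (length A)"
    "r = Poly_Mapping.single 0 c + (\<Sum>l<length A. xv l * s l)" using R_decomp[OF r] by blast
  have "r * g - sc c g = (\<Sum>l<length A. xv l * (s l * g))"
    unfolding cs(2) by (simp add: sc_def distrib_right sum_distrib_right mult.assoc)
  moreover have "\<forall>l<length A. s l * g \<in> toric_ideal A" using cs(1) g G by (auto intro: I_mult)
  ultimately have "r * g - sc c g \<in> mI (length A) (toric_ideal A)"
    unfolding mI_def by (intro CollectI exI[of _ "\<lambda>l. s l * g"]) simp
  moreover have "sc c g \<in> vs.span G" by (rule vs.span_scale, rule vs.span_base, rule g)
  ultimately show "\<exists>s\<in>vs.span G. r * g - s \<in> mI (length A) (toric_ideal A)" by (intro bexI[of _ "sc c g"])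
qed



lemma hc_add: "hc P (p + q) = hc P p + hc P q"
  unfolding hc_def by (rule lin_add) simp

lemma hc_sum: "hc P (sum f I) = (\<Sum>x\<in>I. hc P (f x))"
  unfolding hc_def by (rule lin_sum) simp

lemma hc_single: "hc P (Poly_Mapping.single \<alpha> c) = (if P \<alpha> then Poly_Mapping.single \<alpha> c else 0)"
  unfolding hc_def by (rule lin_single) simp

lemma hc_cong: "(\<And>\<alpha>. P \<alpha> = P' \<alpha>) \<Longrightarrow> hc P p = hc P' p"
  unfolding hc_def by (rule arg_cong[where f="\<lambda>F. lin F p"]) auto

lemma hc_shift:
  "hc P (Poly_Mapping.single \<gamma> c * p) = Poly_Mapping.single \<gamma> c * hc (\<lambda>\<alpha>. P (\<gamma> + \<alpha>)) p"
proof -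
  have e: "Poly_Mapping.single \<gamma> c * q = (\<Sum>\<alpha>\<in>Poly_Mapping.keys q. Poly_Mapping.single (\<gamma> + \<alpha>) (c * Poly_Mapping.lookup q \<alpha>))" for q :: "'a::field mpoly"
  proof -
    have "Poly_Mapping.single \<gamma> c * q = Poly_Mapping.single \<gamma> c * (\<Sum>\<alpha>\<in>Poly_Mapping.keys q. Poly_Mapping.single \<alpha> (Poly_Mapping.lookup q \<alpha>))"
      by (rule arg_cong[where f="\<lambda>x. _ * x"], rule expand_mpoly)
    thus ?thesis by (simp add: sum_distrib_left mult_single)
  qed
  have "hc P (Poly_Mapping.single \<gamma> c * p) = (\<Sum>\<alpha>\<in>Poly_Mapping.keys p. if P (\<gamma> + \<alpha>) then Poly_Mapping.single (\<gamma> + \<alpha>) (c * Poly_Mapping.lookup p \<alpha>) else 0)"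
    unfolding e hc_sum hc_single ..
  also have "\<dots> = Poly_Mapping.single \<gamma> c * (\<Sum>\<alpha>\<in>Poly_Mapping.keys p. if P (\<gamma> + \<alpha>) then Poly_Mapping.single \<alpha> (Poly_Mapping.lookup p \<alpha>) else 0)"
    by (simp add: sum_distrib_left mult_single if_distrib[of "\<lambda>x. _ * x"] cong: if_cong)
  also have "\<dots> = Poly_Mapping.single \<gamma> c * hc (\<lambda>\<alpha>. P (\<gamma> + \<alpha>)) p"
    unfolding hc_def lin_def ..
  finally show ?thesis .
qed

lemma hc_all: "(\<forall>\<alpha>\<in>Poly_Mapping.keys h. P \<alpha>) \<Longrightarrow> hc P h = h"
  by (rule poly_mapping_eqI) (auto simp: lookup_hc in_keys_iff)

lemma hc_none: "(\<forall>\<alpha>\<in>Poly_Mapping.keys h. \<not> P \<alpha>) \<Longrightarrow> hc P h = 0"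
  by (rule poly_mapping_eqI) (auto simp: lookup_hc in_keys_iff)

context tsetup begin

definition wt :: "(nat \<Rightarrow> nat) \<Rightarrow> nat" where "wt \<beta> = (\<Sum>l<m. \<beta> l)"

lemma wt_pos: assumes "j < length A" shows "wt (A ! j) > 0"
proof -
  have "A ! j \<in> set A" using assms by simp
  hence "A ! j \<noteq> (\<lambda>_. 0)" using nz by blast
  then obtain l where l: "(A ! j) l \<noteq> 0" by auto
  have "l < m" using bnd \<open>A ! j \<in> set A\<close> l by (meson not_le)
  hence "(A ! j) l \<le> wt (A ! j)" unfolding wt_def by (intro member_le_sum) auto
  thus ?thesis using l by simp
qed

lemma texp_shift: "l < length A \<Longrightarrow> toric_exp A (Poly_Mapping.single l 1 + \<alpha>) = (\<lambda>k. (A ! l) k + toric_exp A \<alpha> k)"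
  by (simp add: fun_eq_iff texp_add texp_single)

lemma nakayama:
  fixes H :: "'k::field mpoly set"
  assumes fH: "finite H" and HI: "H \<subseteq> toric_ideal A"
    and Hhom: "\<forall>h\<in>H. \<exists>\<beta>. \<forall>\<alpha>\<in>Poly_Mapping.keys h. toric_exp A \<alpha> = \<beta>"
    and sp: "\<forall>p\<in>toric_ideal A. \<exists>s\<in>vs.span H. p - s \<in> mI (length A) (toric_ideal A)"
  shows "toric_ideal A \<subseteq> ideal_gen (length A) H"
proof -
  have main: "p \<in> ideal_gen (length A) H"
    if "p \<in> toric_ideal A" "\<forall>\<alpha>\<in>Poly_Mapping.keys p. toric_exp A \<alpha> = \<beta>" for p :: "'k mpoly" and \<beta>
    using that
  proof (induction "wt \<beta>" arbitrary: p \<beta> rule: less_induct)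
    case less
    let ?T = "hc (\<lambda>\<alpha>. toric_exp A \<alpha> = \<beta>) :: 'k mpoly \<Rightarrow> 'k mpoly"
    obtain s where s: "s \<in> vs.span H" "p - s \<in> mI (length A) (toric_ideal A)" using sp less.prems by blast
    obtain q where q: "\<forall>l<length A. q l \<in> toric_ideal A" "p - s = (\<Sum>l<length A. xv l * q l)"
      using s(2) unfolding mI_def by blast
    obtain u where u: "s = (\<Sum>h\<in>H. sc (u h) h)" using s(1) vs.span_finite[OF fH] by blast
    have Tp: "?T p = p" by (rule hc_all) (use less.prems in auto)
    have Th: "?T h \<in> ideal_gen (length A) H" if h: "h \<in> H" for h
    proof -
      obtain \<beta>h where bh: "\<forall>\<alpha>\<in>Poly_Mapping.keys h. toric_exp A \<alpha> = \<beta>h" using Hhom h by blast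
      show ?thesis
      proof (cases "\<beta>h = \<beta>")
        case True
        hence "?T h = h" by (intro hc_all) (use bh in auto)
        thus ?thesis using IG_gen[OF h] by simp
      next
        case False
        hence "?T h = 0" by (intro hc_none) (use bh in auto)
        thus ?thesis by simp
      qed
    qed
    have Ts: "?T s \<in> ideal_gen (length A) H"
    proof -
      have "?T s = (\<Sum>h\<in>H. sc (u h) (?T h))" unfolding u hc_sum sc_def hc_shift by simp
      also have "\<dots> \<in> ideal_gen (length A) H"
        by (intro IG_sum, unfold sc_def, rule IG_mult[OF R_single], simp, rule Th)
      finally show ?thesis .
    qed
    have Tq: "?T (xv l * q l) \<in> ideal_gen (length A) H" if l: "l < length A" for l
    proof -
      define Q where "Q = (\<lambda>x::nat \<Rightarrow> nat. (\<lambda>k. (A ! l) k + x k) = \<beta>)"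
      let ?q' = "hc (\<lambda>\<alpha>. Q (toric_exp A \<alpha>)) (q l)"
      have "?T (xv l * q l) = xv l * hc (\<lambda>\<alpha>. toric_exp A (Poly_Mapping.single l 1 + \<alpha>) = \<beta>) (q l)"
        unfolding xv_def hc_shift ..
      also have "hc (\<lambda>\<alpha>. toric_exp A (Poly_Mapping.single l 1 + \<alpha>) = \<beta>) (q l) = ?q'"
        by (rule hc_cong) (simp only: Q_def texp_shift[OF l])
      finally have e: "?T (xv l * q l) = xv l * ?q'" .
      have q'I: "?q' \<in> toric_ideal A" using I_hc q(1) l by blast
      have "?q' \<in> ideal_gen (length A) H"
      proof (cases "Poly_Mapping.keys ?q' = {}")
        case True
        hence "?q' = 0" by simp
        thus ?thesis by simp
      next
        case False
        then obtain \<alpha>0 where a0: "\<alpha>0 \<in> Poly_Mapping.keys ?q'" by blast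
        define \<gamma> where "\<gamma> = toric_exp A \<alpha>0"
        have Qa: "Q (toric_exp A \<alpha>)" if "\<alpha> \<in> Poly_Mapping.keys ?q'" for \<alpha>
          using that by (simp add: keys_hc)
        have hom: "\<forall>\<alpha>\<in>Poly_Mapping.keys ?q'. toric_exp A \<alpha> = \<gamma>"
        proof
          fix \<alpha> assume "\<alpha> \<in> Poly_Mapping.keys ?q'"
          from Qa[OF this] Qa[OF a0] show "toric_exp A \<alpha> = \<gamma>"
            unfolding Q_def \<gamma>_def by (auto simp: fun_eq_iff) (metis add_left_cancel)
        qed
        have "\<beta> = (\<lambda>k. (A ! l) k + \<gamma> k)" using Qa[OF a0] unfolding Q_def \<gamma>_def by simp
        hence "wt \<beta> = wt (A ! l) + wt \<gamma>" unfolding wt_def by (simp add: sum.distrib)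
        hence "wt \<gamma> < wt \<beta>" using wt_pos[OF l] by simp
        thus ?thesis using less.hyps q'I hom by blast
      qed
      thus ?thesis unfolding e by (rule IG_mult[OF R_xv[OF l]])
    qed
    have "p = ?T p" using Tp by simp
    also have "\<dots> = ?T (s + (p - s))" by simp
    also have "\<dots> = ?T s + (\<Sum>l<length A. ?T (xv l * q l))" unfolding hc_add q(2) hc_sum ..
    also have "\<dots> \<in> ideal_gen (length A) H"
      by (intro IG_add Ts IG_sum Tq) simp
    finally show ?case .
  qed
  show ?thesis
  proof
    fix p :: "'k mpoly" assume pI: "p \<in> toric_ideal A"
    have "hc (\<lambda>\<alpha>. toric_exp A \<alpha> = \<beta>) p \<in> ideal_gen (length A) H" for \<beta>
      by (rule main[of _ \<beta>]) (use I_hc[of p A "\<lambda>x. x = \<beta>"] pI in \<open>auto simp: keys_hc\<close>)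
    hence "(\<Sum>\<beta>\<in>toric_exp A ` Poly_Mapping.keys p. hc (\<lambda>\<alpha>. toric_exp A \<alpha> = \<beta>) p) \<in> ideal_gen (length A) H"
      by (intro IG_sum)
    thus "p \<in> ideal_gen (length A) H" unfolding hc_decomp[of p A, symmetric] .
  qed
qed

end


context tsetup begin

lemma min_indep:
  fixes H0 :: "'k::field mpoly set"
  assumes fH0: "finite H0"
    and Q0: "\<forall>p\<in>toric_ideal A. \<exists>s\<in>vs.span H0. p - s \<in> mI (length A) (toric_ideal A)"
    and minimal: "\<And>H1. H1 \<subseteq> H0 \<Longrightarrow> (\<forall>p\<in>toric_ideal A. \<exists>s\<in>vs.span H1. p - s \<in> mI (length A) (toric_ideal A)) \<Longrightarrow> card H0 \<le> card H1"
  shows "\<forall>c. (\<Sum>h\<in>H0. sc (c h) h) \<in> mI (length A) (toric_ideal A) \<longrightarrow> (\<forall>h\<in>H0. c h = 0)"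
proof (intro allI impI ballI, rule ccontr)
  fix c h0
  assume w: "(\<Sum>h\<in>H0. sc (c h) h) \<in> mI (length A) (toric_ideal A)" and h0: "h0 \<in> H0" and ch0: "c h0 \<noteq> 0"
  define H1 where "H1 = H0 - {h0}"
  have "\<forall>p\<in>toric_ideal A. \<exists>s\<in>vs.span H1. p - s \<in> mI (length A) (toric_ideal A)"
  proof
    fix p :: "'k mpoly" assume "p \<in> toric_ideal A"
    then obtain s where s: "s \<in> vs.span H0" "p - s \<in> mI (length A) (toric_ideal A)" using Q0 by blast
    obtain u where u: "s = (\<Sum>h\<in>H0. sc (u h) h)" using s(1) vs.span_finite[OF fH0] by blast
    define t where "t = u h0 / c h0"
    define s' where "s' = s - sc t (\<Sum>h\<in>H0. sc (c h) h)"
    have s'e: "s' = (\<Sum>h\<in>H0. sc (u h - t * c h) h)"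
      unfolding s'_def u by (simp add: sc_def sum_distrib_left sum_subtractf mult.assoc[symmetric] mult_single single_diff left_diff_distrib)
    also have "\<dots> = (\<Sum>h\<in>H1. sc (u h - t * c h) h)"
    proof -
      have "(\<Sum>h\<in>H0. sc (u h - t * c h) h) = sc (u h0 - t * c h0) h0 + (\<Sum>h\<in>H1. sc (u h - t * c h) h)"
        unfolding H1_def using fH0 h0 by (simp add: sum.remove)
      moreover have "u h0 - t * c h0 = 0" unfolding t_def using ch0 by simp
      ultimately show ?thesis by (simp add: sc_def)
    qed
    finally have "s' \<in> vs.span H1"
      by (metis (no_types, lifting) DiffI H1_def vs.span_base vs.span_scale vs.span_sum)
    moreover have "p - s' \<in> mI (length A) (toric_ideal A)"
    proof -
      have e: "p - s' = (p - s) + sc t (\<Sum>h\<in>H0. sc (c h) h)" unfolding s'_def by simp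
      show ?thesis unfolding e by (rule mI_add[OF s(2) mI_sc[OF w]])
    qed
    ultimately show "\<exists>s\<in>vs.span H1. p - s \<in> mI (length A) (toric_ideal A)" by blast
  qed
  hence "card H0 \<le> card H1" using minimal H1_def by blast
  moreover have "card H1 < card H0" unfolding H1_def using fH0 h0 by (metis card_Diff1_less)
  ultimately show False by simp
qed

lemma dirB:
  fixes G :: "'k::field mpoly set"
  assumes fG: "finite G" and GR: "G \<subseteq> poly_ring (length A)" and GI: "ideal_gen (length A) G = toric_ideal A"
  shows "\<exists>G'::'k mpoly set. finite G' \<and> G' \<subseteq> poly_ring (length A) \<and> ideal_gen (length A) G' = toric_ideal A' \<and> card G' \<le> card G"
proof -
  let ?I = "toric_ideal A :: 'k mpoly set"
  let ?M = "mI (length A) ?I"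
  have GsI: "G \<subseteq> ?I" using GI IG_gen by blast
  define S where "S = (\<Union>g\<in>G. (\<lambda>\<beta>. hc (\<lambda>\<alpha>. toric_exp A \<alpha> = \<beta>) g) ` (toric_exp A ` Poly_Mapping.keys g))"
  have fS: "finite S" unfolding S_def using fG by auto
  have SI: "S \<subseteq> ?I" unfolding S_def using GsI I_hc[of _ A "\<lambda>x. x = _"] by auto
  have Shom: "\<forall>h\<in>S. \<exists>\<beta>. \<forall>\<alpha>\<in>Poly_Mapping.keys h. toric_exp A \<alpha> = \<beta>"
    unfolding S_def by (auto simp: keys_hc)
  have IS: "?I \<subseteq> ideal_gen (length A) S"
  proof
    fix p assume "p \<in> ?I"
    hence "p \<in> ideal_gen (length A) G" using GI by simp
    thus "p \<in> ideal_gen (length A) S"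
    proof (rule IG_induct[where P="\<lambda>x. x \<in> ideal_gen (length A) S"])
      show "p + q \<in> ideal_gen (length A) S" if "p \<in> ideal_gen (length A) S" "q \<in> ideal_gen (length A) S" for p q
        using that by (rule IG_add)
      show "r * g \<in> ideal_gen (length A) S" if r: "r \<in> poly_ring (length A)" and g: "g \<in> G" for r g
      proof -
        have "(\<Sum>\<beta>\<in>toric_exp A ` Poly_Mapping.keys g. hc (\<lambda>\<alpha>. toric_exp A \<alpha> = \<beta>) g) \<in> ideal_gen (length A) S"
          by (intro IG_sum IG_gen) (use g in \<open>auto simp: S_def\<close>)
        hence "g \<in> ideal_gen (length A) S" unfolding hc_decomp[of g A, symmetric] .
        thus ?thesis by (rule IG_mult[OF r])
      qed
    qed simp
  qed
  define QQ where "QQ H \<longleftrightarrow> H \<subseteq> S \<and> (\<forall>p\<in>?I. \<exists>s\<in>vs.span H. p - s \<in> ?M)" for H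
  have "QQ S" unfolding QQ_def
  proof (intro conjI ballI order_refl)
    fix p assume "p \<in> ?I"
    thus "\<exists>s\<in>vs.span S. p - s \<in> ?M" using span_mod[OF SI] IS by blast
  qed
  then obtain H0 where H0: "QQ H0" and H0min: "\<And>H. QQ H \<Longrightarrow> card H0 \<le> card H"
    using ex_has_least_nat[of QQ S card] by blast
  have H0S: "H0 \<subseteq> S" and Q0: "\<forall>p\<in>?I. \<exists>s\<in>vs.span H0. p - s \<in> ?M" using H0 unfolding QQ_def by auto
  have fH0: "finite H0" using H0S fS finite_subset by blast
  have H0I: "H0 \<subseteq> ?I" using H0S SI by blast
  have indep: "\<forall>c. (\<Sum>h\<in>H0. sc (c h) h) \<in> ?M \<longrightarrow> (\<forall>h\<in>H0. c h = 0)"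
    by (rule min_indep[OF fH0 Q0]) (use H0S H0min in \<open>auto simp: QQ_def\<close>)
  have spG: "\<forall>h\<in>H0. \<exists>s\<in>vs.span G. h - s \<in> ?M"
    using span_mod[OF GsI] H0I GI by blast
  have cardH0: "card H0 \<le> card G"
    by (rule vs.card_le_mod[OF mI_subspace fG fH0 indep spG])
  have IH0: "ideal_gen (length A) H0 = ?I"
  proof
    show "ideal_gen (length A) H0 \<subseteq> ?I" by (rule IG_sub_toric[OF H0I])
    show "?I \<subseteq> ideal_gen (length A) H0"
      by (rule nakayama[OF fH0 H0I _ Q0]) (use H0S Shom in blast)
  qed
  have "\<forall>h\<in>H0. \<exists>rq::nat \<times> 'k mpoly. snd rq \<in> poly_ring (length A)
        \<and> h = Poly_Mapping.single (Poly_Mapping.single i (fst rq)) 1 * phi (snd rq) \<and> snd rq \<in> toric_ideal A'"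
  proof
    fix h assume h: "h \<in> H0"
    have hR: "h \<in> poly_ring (length A)" using h H0I by (auto simp: in_toric_ideal)
    obtain \<beta> where hb: "\<forall>\<alpha>\<in>Poly_Mapping.keys h. toric_exp A \<alpha> = \<beta>" using h H0S Shom by blast
    obtain r q where "q \<in> poly_ring (length A)" "h = Poly_Mapping.single (Poly_Mapping.single i r) 1 * phi q"
       "h \<in> toric_ideal A \<longrightarrow> q \<in> toric_ideal A'" using homog_decomp[OF hR hb] by blast
    thus "\<exists>rq::nat \<times> 'k mpoly. snd rq \<in> poly_ring (length A)
        \<and> h = Poly_Mapping.single (Poly_Mapping.single i (fst rq)) 1 * phi (snd rq) \<and> snd rq \<in> toric_ideal A'"
      using h H0I by (intro exI[of _ "(r, q)"]) auto
  qed
  then obtain f where f: "\<forall>h\<in>H0. snd (f h) \<in> poly_ring (length A)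
        \<and> h = Poly_Mapping.single (Poly_Mapping.single i (fst (f h))) 1 * phi (snd (f h)) \<and> snd (f h) \<in> toric_ideal A'"
    by (rule bchoice[THEN exE]) blast
  define G' where "G' = (\<lambda>h. snd (f h)) ` H0"
  have fG': "finite G'" unfolding G'_def using fH0 by simp
  have G'R: "G' \<subseteq> poly_ring (length A)" unfolding G'_def using f by auto
  have cG': "card G' \<le> card G" unfolding G'_def using card_image_le[OF fH0, of "\<lambda>h. snd (f h)"] cardH0 by simp
  have G'I: "G' \<subseteq> toric_ideal A'" unfolding G'_def using f by auto
  have "ideal_gen (length A) G' = toric_ideal A'"
  proof
    show "ideal_gen (length A) G' \<subseteq> toric_ideal A'" using IG_sub_toric[OF G'I] by simp
    show "toric_ideal A' \<subseteq> ideal_gen (length A) G'"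
    proof
      fix q :: "'k mpoly" assume qI: "q \<in> toric_ideal A'"
      have "phi q \<in> ideal_gen (length A) H0" using I_phi[OF qI] IH0 by simp
      hence "rho (phi q) \<in> ideal_gen (length A) G'"
      proof (rule IG_induct[where P="\<lambda>x. rho x \<in> ideal_gen (length A) G'"])
        show "rho 0 \<in> ideal_gen (length A) G'" by (simp add: rho_def)
        show "rho (p + q) \<in> ideal_gen (length A) G'"
          if "rho p \<in> ideal_gen (length A) G'" "rho q \<in> ideal_gen (length A) G'" for p q
          using IG_add[OF that] by (simp add: rho_def lin_add)
        show "rho (r * h) \<in> ideal_gen (length A) G'" if r: "r \<in> poly_ring (length A)" and h: "h \<in> H0" for r h
        proof -
          let ?X = "Poly_Mapping.single (Poly_Mapping.single i (fst (f h))) 1 :: 'k mpoly"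
          have "r * h = (r * ?X) * phi (snd (f h))" using f h by (metis mult.assoc)
          hence "rho (r * h) = rho ((r * ?X) * phi (snd (f h)))" by (rule arg_cong)
          also have "\<dots> = rho (r * ?X) * snd (f h)" by (rule rho_mult_phi)
          finally have "rho (r * h) = rho (r * ?X) * snd (f h)" .
          moreover have "rho (r * ?X) \<in> poly_ring (length A)" by (intro R_rho R_mult r R_xpow)
          moreover have "snd (f h) \<in> G'" unfolding G'_def using h by blast
          ultimately show ?thesis using IG_mult IG_gen by metis
        qed
      qed
      thus "q \<in> ideal_gen (length A) G'" by (simp add: rho_phi)
    qed
  qed
  thus ?thesis using fG' G'R cG' by blast
qed

end


lemma Least_eq_nat:
  assumes PQ: "\<And>c. P c \<Longrightarrow> \<exists>c'\<le>c. Q c'" and QP: "\<And>c. Q c \<Longrightarrow> \<exists>c'\<le>c. P c'"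
  shows "(LEAST c::nat. P c) = (LEAST c. Q c)"
proof (cases "\<exists>c. P c")
  case True
  then obtain c0 where "P c0" by blast
  hence PL: "P (LEAST c. P c)" by (rule LeastI)
  then obtain c' where c': "c' \<le> (LEAST c. P c)" "Q c'" using PQ by blast
  hence QL: "Q (LEAST c. Q c)" by (intro LeastI)
  have 1: "(LEAST c. Q c) \<le> (LEAST c. P c)" using Least_le[of Q c'] c' by simp
  obtain c'' where c'': "c'' \<le> (LEAST c. Q c)" "P c''" using QP[OF QL] by blast
  have 2: "(LEAST c. P c) \<le> (LEAST c. Q c)" using Least_le[of P c''] c'' by simp
  show ?thesis using 1 2 by simp
next
  case False
  hence "\<not> (\<exists>c. Q c)" using QP by blast
  hence "P = Q" using False by (auto simp: fun_eq_iff)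
  thus ?thesis by simp
qed

context tsetup begin

lemma indep_iff:
  assumes S: "S \<subseteq> {..<length A}"
  shows "lin_indep_Q A' S \<longleftrightarrow> lin_indep_Q A S"
proof -
  have key: "(\<Sum>j\<in>S. c j * of_nat ((A' ! j) l)) = (\<Sum>j\<in>S. (if j = i then of_nat b * c j else c j) * of_nat ((A ! j) l))"
    for c :: "nat \<Rightarrow> rat" and l
    by (rule sum.cong) (use S in \<open>auto simp: A'_nth\<close>)
  have b0: "(of_nat b :: rat) \<noteq> 0" using bpos by simp
  show ?thesis
  proof
    assume ind: "lin_indep_Q A' S"
    show "lin_indep_Q A S" unfolding lin_indep_Q_def
    proof (intro allI impI ballI)
      fix c :: "nat \<Rightarrow> rat" and j
      assume z: "\<forall>l. (\<Sum>j\<in>S. c j * of_nat ((A ! j) l)) = 0" and j: "j \<in> S"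
      define c' where "c' j = (if j = i then c j / of_nat b else c j)" for j
      have "\<forall>l. (\<Sum>j\<in>S. c' j * of_nat ((A' ! j) l)) = 0"
      proof
        fix l
        have "(\<Sum>j\<in>S. c' j * of_nat ((A' ! j) l)) = (\<Sum>j\<in>S. c j * of_nat ((A ! j) l))"
          by (rule sum.cong) (use S b0 in \<open>auto simp: c'_def A'_nth\<close>)
        thus "(\<Sum>j\<in>S. c' j * of_nat ((A' ! j) l)) = 0" using z by simp
      qed
      hence "c' j = 0" using ind j unfolding lin_indep_Q_def by blast
      thus "c j = 0" using b0 by (simp add: c'_def split: if_splits)
    qed
  next
    assume ind: "lin_indep_Q A S"
    show "lin_indep_Q A' S" unfolding lin_indep_Q_def
    proof (intro allI impI ballI)
      fix c :: "nat \<Rightarrow> rat" and j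
      assume z: "\<forall>l. (\<Sum>j\<in>S. c j * of_nat ((A' ! j) l)) = 0" and j: "j \<in> S"
      define c'' where "c'' j = (if j = i then of_nat b * c j else c j)" for j
      have "\<forall>l. (\<Sum>j\<in>S. c'' j * of_nat ((A ! j) l)) = 0"
        using z unfolding key c''_def .
      hence "c'' j = 0" using ind j unfolding lin_indep_Q_def by blast
      thus "c j = 0" using b0 by (simp add: c''_def split: if_splits)
    qed
  qed
qed

lemma rank_eq: "lattice_rank A' = lattice_rank A"
proof -
  have "{card S |S. S \<subseteq> {..<length A'} \<and> lin_indep_Q A' S} = {card S |S. S \<subseteq> {..<length A} \<and> lin_indep_Q A S}"
    using indep_iff by auto
  thus ?thesis unfolding lattice_rank_def by simp
qed

lemma muB: "\<exists>G::'k::field mpoly set. finite G \<and> G \<subseteq> poly_ring (length A) \<and> ideal_gen (length A) G = toric_ideal A \<and> card G = c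
   \<Longrightarrow> \<exists>c'\<le>c. \<exists>G'::'k mpoly set. finite G' \<and> G' \<subseteq> poly_ring (length A) \<and> ideal_gen (length A) G' = toric_ideal A' \<and> card G' = c'"
proof -
  assume "\<exists>G::'k::field mpoly set. finite G \<and> G \<subseteq> poly_ring (length A) \<and> ideal_gen (length A) G = toric_ideal A \<and> card G = c"
  then obtain G :: "'k mpoly set" where G: "finite G" "G \<subseteq> poly_ring (length A)" "ideal_gen (length A) G = toric_ideal A" "card G = c" by blast
  obtain G' :: "'k mpoly set" where G': "finite G'" "G' \<subseteq> poly_ring (length A)" "ideal_gen (length A) G' = toric_ideal A'" "card G' \<le> card G"
    using dirB[OF G(1-3)] by blast
  show ?thesis using G' G(4) by blast
qed

lemma muA: "\<exists>G::'k::field mpoly set. finite G \<and> G \<subseteq> poly_ring (length A) \<and> ideal_gen (length A) G = toric_ideal A' \<and> card G = c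
   \<Longrightarrow> \<exists>c'\<le>c. \<exists>G'::'k mpoly set. finite G' \<and> G' \<subseteq> poly_ring (length A) \<and> ideal_gen (length A) G' = toric_ideal A \<and> card G' = c'"
proof -
  assume "\<exists>G::'k::field mpoly set. finite G \<and> G \<subseteq> poly_ring (length A) \<and> ideal_gen (length A) G = toric_ideal A' \<and> card G = c"
  then obtain G :: "'k mpoly set" where G: "finite G" "G \<subseteq> poly_ring (length A)" "ideal_gen (length A) G = toric_ideal A'" "card G = c" by blast
  obtain G' :: "'k mpoly set" where G': "finite G'" "G' \<subseteq> poly_ring (length A)" "ideal_gen (length A) G' = toric_ideal A" "card G' \<le> card G"
    using dirA[OF G(1-3)] by blast
  show ?thesis using G' G(4) by blast
qed

lemma mu_eq: "mu (length A) (toric_ideal A :: 'k::field mpoly set) = mu (length A) (toric_ideal A' :: 'k mpoly set)"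
  unfolding mu_def
  apply (rule Least_eq_nat)
   apply (rule muB)
   apply assumption
  apply (rule muA)
  apply assumption
  done

end

theorem mainTheorem3:
  fixes A :: "(nat \<Rightarrow> nat) list" and m i b :: nat
  assumes "\<forall>a\<in>set A. \<forall>l\<ge>m. a l = 0"
    and "\<forall>a\<in>set A. a \<noteq> (\<lambda>_. 0)"
    and "i < length A"
    and "in_Q_span_others A i"
    and "b > 0" and "b dvd B_index A i"
  shows "mu (length A) (toric_ideal A :: 'k::field mpoly set)
           = mu (length A) (toric_ideal (A[i := (\<lambda>l. b * (A ! i) l)]) :: 'k mpoly set)
         \<and> (toric_ci TYPE('k) A \<longleftrightarrow> toric_ci TYPE('k) (A[i := (\<lambda>l. b * (A ! i) l)]))"
proof -
  interpret tsetup A m i b using assms by unfold_locales auto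
  have AA: "A[i := (\<lambda>l. b * (A ! i) l)] = A'" by (simp add: A'_def)
  have mu: "mu (length A) (toric_ideal A :: 'k::field mpoly set) = mu (length A) (toric_ideal A' :: 'k mpoly set)"
    by (rule mu_eq)
  have ht: "toric_height A' = toric_height A" unfolding toric_height_def by (simp add: rank_eq)
  show ?thesis unfolding AA toric_ci_def using mu ht by simp
qed


end
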